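(* Let $A$ and $G$ be nonzero torsion-free abelian groups with the same nucleus $R$ such that $\mathrm{Ext}(A,\bigoplus_\omega G)=0$. Then $A$ is an $\aleph_1$-free $R$-module.
   Context: For a torsion-free abelian group $X\neq0$, $\mathrm{nuc}\,X$ is the largest subring $R$ of $\mathbb{Q}$ such that $X$ is an $R$-module. $\bigoplus_\omega G$ denotes the direct sum of countably many copies of $G$. An $R$-module is $\aleph_1$-free if every countably generated $R$-submodule is free. *)

theory Defs
  imports Complex_Main "HOL-Library.Function_Algebras" "HOL-Library.Countable_Set"
begin

text \<open>Abelian groups are modelled as types of class ab_group_add (the whole type is the group).\<close>

definition nmul :: "nat \<Rightarrow> 'a::ab_group_add \<Rightarrow> 'a" where
  "nmul n x = (\<Sum>i<n. x)"

definition torsion_free :: "'a::ab_group_add itself \<Rightarrow> bool" where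
  "torsion_free _ \<longleftrightarrow> (\<forall>n (x::'a). n > 0 \<longrightarrow> nmul n x = 0 \<longrightarrow> x = 0)"

definition nonzero_group :: "'a::ab_group_add itself \<Rightarrow> bool" where
  "nonzero_group _ \<longleftrightarrow> (\<exists>x::'a. x \<noteq> 0)"

definition rat_subring :: "rat set \<Rightarrow> bool" where
  "rat_subring R \<longleftrightarrow> 1 \<in> R \<and> (\<forall>r\<in>R. \<forall>s\<in>R. r + s \<in> R \<and> r * s \<in> R \<and> - r \<in> R)"

definition rmodule :: "rat set \<Rightarrow> (rat \<Rightarrow> 'a::ab_group_add \<Rightarrow> 'a) \<Rightarrow> bool" where
  "rmodule R smul \<longleftrightarrow>
     (\<forall>r\<in>R. \<forall>s\<in>R. \<forall>x y.
        smul r (x + y) = smul r x + smul r y \<and>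
        smul (r + s) x = smul r x + smul s x \<and>
        smul (r * s) x = smul r (smul s x) \<and>
        smul 1 x = x)"

definition is_module_over :: "rat set \<Rightarrow> 'a::ab_group_add itself \<Rightarrow> bool" where
  "is_module_over R _ \<longleftrightarrow> (\<exists>smul :: rat \<Rightarrow> 'a \<Rightarrow> 'a. rmodule R smul)"

definition is_nucleus :: "rat set \<Rightarrow> 'a::ab_group_add itself \<Rightarrow> bool" where
  "is_nucleus R X \<longleftrightarrow> rat_subring R \<and> is_module_over R X \<and>
     (\<forall>R'. rat_subring R' \<and> is_module_over R' X \<longrightarrow> R' \<subseteq> R)"

definition dsum_omega :: "'g::ab_group_add itself \<Rightarrow> (nat \<Rightarrow> 'g) set" where
  "dsum_omega _ = {f. finite {n. f n \<noteq> 0}}"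

text \<open>Ext(A,B) = 0 for a subgroup B of 'b, via factor sets (Fuchs): every (symmetric)
  factor set A x A -> B is trivial, i.e. every extension of B by A splits.\<close>
definition factor_set :: "'b::ab_group_add set \<Rightarrow> ('a::ab_group_add \<Rightarrow> 'a \<Rightarrow> 'b) \<Rightarrow> bool" where
  "factor_set B f \<longleftrightarrow> (\<forall>x y. f x y \<in> B) \<and> (\<forall>x y. f x y = f y x) \<and>
     (\<forall>x y z. f x y + f (x + y) z = f x (y + z) + f y z)"

definition ext_zero :: "'a::ab_group_add itself \<Rightarrow> 'b::ab_group_add set \<Rightarrow> bool" where
  "ext_zero _ B \<longleftrightarrow> (\<forall>f :: 'a \<Rightarrow> 'a \<Rightarrow> 'b. factor_set B f \<longrightarrow>
      (\<exists>g :: 'a \<Rightarrow> 'b. (\<forall>x. g x \<in> B) \<and> (\<forall>x y. f x y = g x + g y - g (x + y))))"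

definition rspan :: "rat set \<Rightarrow> (rat \<Rightarrow> 'a::ab_group_add \<Rightarrow> 'a) \<Rightarrow> 'a set \<Rightarrow> 'a set" where
  "rspan R smul S = {x. \<exists>T c. finite T \<and> T \<subseteq> S \<and> (\<forall>t\<in>T. c t \<in> R) \<and> x = (\<Sum>t\<in>T. smul (c t) t)}"

definition rsubmodule :: "rat set \<Rightarrow> (rat \<Rightarrow> 'a::ab_group_add \<Rightarrow> 'a) \<Rightarrow> 'a set \<Rightarrow> bool" where
  "rsubmodule R smul M \<longleftrightarrow> 0 \<in> M \<and> (\<forall>x\<in>M. \<forall>y\<in>M. x + y \<in> M) \<and> (\<forall>r\<in>R. \<forall>x\<in>M. smul r x \<in> M)"

definition rindep :: "rat set \<Rightarrow> (rat \<Rightarrow> 'a::ab_group_add \<Rightarrow> 'a) \<Rightarrow> 'a set \<Rightarrow> bool" where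
  "rindep R smul B \<longleftrightarrow> (\<forall>T c. finite T \<longrightarrow> T \<subseteq> B \<longrightarrow> (\<forall>t\<in>T. c t \<in> R) \<longrightarrow>
      (\<Sum>t\<in>T. smul (c t) t) = 0 \<longrightarrow> (\<forall>t\<in>T. c t = 0))"

definition rfree :: "rat set \<Rightarrow> (rat \<Rightarrow> 'a::ab_group_add \<Rightarrow> 'a) \<Rightarrow> 'a set \<Rightarrow> bool" where
  "rfree R smul M \<longleftrightarrow> (\<exists>B. B \<subseteq> M \<and> rindep R smul B \<and> rspan R smul B = M)"

definition aleph1_free :: "rat set \<Rightarrow> (rat \<Rightarrow> 'a::ab_group_add \<Rightarrow> 'a) \<Rightarrow> bool" where
  "aleph1_free R smul \<longleftrightarrow> (\<forall>M. rsubmodule R smul M \<longrightarrow>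
      (\<exists>S. countable S \<and> S \<subseteq> M \<and> rspan R smul S = M) \<longrightarrow> rfree R smul M)"

end

theory Submission
  imports Defs
begin

lemma nmul_0[simp]: "nmul 0 x = 0" by (simp add: nmul_def)
lemma nmul_Suc: "nmul (Suc n) x = nmul n x + x" by (simp add: nmul_def)
lemma nmul_add_left: "nmul (m+n) x = nmul m x + nmul n x"
  by (induction n) (simp_all add: nmul_Suc add.assoc)
lemma nmul_add_right: "nmul n (x+y) = nmul n x + nmul n y"
  by (induction n) (simp_all add: nmul_Suc algebra_simps)
lemma nmul_fun: "nmul n (f::'i \<Rightarrow> 'b::ab_group_add) j = nmul n (f j)"
  by (induction n) (simp_all add: nmul_Suc)

definition zmul :: "int \<Rightarrow> 'a::ab_group_add \<Rightarrow> 'a" where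
  "zmul k x = nmul (nat k) x - nmul (nat (-k)) x"

lemma zmul_0[simp]: "zmul 0 x = 0" by (simp add: zmul_def)
lemma zmul_1[simp]: "zmul 1 x = x" by (simp add: zmul_def nmul_def)
lemma zmul_nat: "zmul (int n) x = nmul n x" by (simp add: zmul_def)
lemma zmul_succ: "zmul (k+1) x = zmul k x + x"
proof (cases "k \<ge> 0")
  case True
  then have "nat (k+1) = Suc (nat k)" by simp
  then show ?thesis using True by (simp add: zmul_def nmul_Suc)
next
  case False
  then have "nat (-k) = Suc (nat (-(k+1)))" by simp
  then show ?thesis using False by (simp add: zmul_def nmul_Suc)
qed
lemma zmul_pred: "zmul (k-1) x = zmul k x - x"
  using zmul_succ[of "k-1" x] by simp
lemma zmul_add_left: "zmul (k+l) x = zmul k x + zmul l x"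
proof (induction l rule: int_induct[where k=0])
  case base then show ?case by simp
next
  case (step1 i) then show ?case using zmul_succ[of "k+i" x] zmul_succ[of i x] by (simp add: add.assoc)
next
  case (step2 i)
  have a: "zmul (k+(i-1)) x = zmul (k+i) x - x" using zmul_pred[of "k+i" x] by (simp add: algebra_simps)
  have b: "zmul (i-1) x = zmul i x - x" by (rule zmul_pred)
  have "zmul (k+(i-1)) x = zmul k x + zmul i x - x" unfolding a step2(2) by simp
  also have "\<dots> = zmul k x + zmul (i-1) x" unfolding b by (simp add: algebra_simps)
  finally show ?case .
qed
lemma zmul_add_right: "zmul k (x+y) = zmul k x + zmul k y"
  by (simp add: zmul_def nmul_add_right algebra_simps)
lemma zmul_zero_right[simp]: "zmul k 0 = 0"
  using zmul_add_right[of k 0 0] by simp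
lemma zmul_minus_right: "zmul k (-x) = - zmul k x"
  using zmul_add_right[of k x "-x"] by (simp add: add_eq_0_iff2)
lemma zmul_diff_right: "zmul k (x-y) = zmul k x - zmul k y"
  using zmul_add_right[of k x "-y"] zmul_minus_right[of k y] by simp
lemma zmul_minus_left: "zmul (-k) x = - zmul k x"
  using zmul_add_left[of k "-k" x] by (simp add: add_eq_0_iff2)
lemma zmul_diff_left: "zmul (k-l) x = zmul k x - zmul l x"
  using zmul_add_left[of k "-l" x] zmul_minus_left[of l x] by simp
lemma zmul_mult: "zmul (k*l) x = zmul k (zmul l x)"
proof (induction k rule: int_induct[where k=0])
  case base then show ?case by simp
next
  case (step1 i) then show ?case using zmul_succ[of i "zmul l x"]
    by (simp add: distrib_right zmul_add_left)
next
  case (step2 i) then show ?case using zmul_pred[of i "zmul l x"]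
    by (simp add: left_diff_distrib zmul_diff_left)
qed
lemma zmul_fun: "zmul k (f::'i \<Rightarrow> 'b::ab_group_add) j = zmul k (f j)"
  by (simp add: zmul_def nmul_fun)

lemma zmul_sum: "zmul k (sum f A) = sum (\<lambda>a. zmul k (f a)) A"
  by (induction A rule: infinite_finite_induct) (simp_all add: zmul_add_right)

lemma torsion_free_zmul:
  assumes "torsion_free TYPE('a::ab_group_add)" "zmul k (x::'a) = 0" "k \<noteq> 0"
  shows "x = 0"
proof (cases "k > 0")
  case True
  then have "nmul (nat k) x = 0" using assms(2) zmul_nat[of "nat k" x] by simp
  then show ?thesis using assms(1) True unfolding torsion_free_def by (metis zero_less_nat_eq)
next
  case False
  then have "zmul (-k) x = 0" using assms(2) zmul_minus_left[of k x] by simp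
  then have "nmul (nat (-k)) x = 0" using False assms(3) zmul_nat[of "nat (-k)" x] by simp
  then show ?thesis using assms False unfolding torsion_free_def by (metis neg_0_less_iff_less not_less_iff_gr_or_eq zero_less_nat_eq)
qed

lemma torsion_free_zmul_cancel:
  assumes "torsion_free TYPE('a::ab_group_add)" "zmul k (x::'a) = zmul k y" "k \<noteq> 0"
  shows "x = y"
  using torsion_free_zmul[OF assms(1), of k "x-y"] assms(2,3) by (simp add: zmul_diff_right)

definition subgrp :: "'a::ab_group_add set \<Rightarrow> bool" where
  "subgrp S \<longleftrightarrow> 0 \<in> S \<and> (\<forall>x\<in>S. \<forall>y\<in>S. x + y \<in> S) \<and> (\<forall>x\<in>S. -x \<in> S)"

lemma subgrp_zmul: "subgrp S \<Longrightarrow> x \<in> S \<Longrightarrow> zmul k x \<in> S"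
proof (induction k rule: int_induct[where k=0])
  case base then show ?case by (simp add: subgrp_def)
next
  case (step1 i) then show ?case by (simp add: zmul_succ subgrp_def)
next
  case (step2 i) then show ?case unfolding zmul_pred subgrp_def by (metis diff_conv_add_uminus)
qed

lemma subgrp_diff: "subgrp S \<Longrightarrow> x \<in> S \<Longrightarrow> y \<in> S \<Longrightarrow> x - y \<in> S"
  unfolding subgrp_def by (metis diff_conv_add_uminus)

lemma additive_zmul:
  assumes "subgrp S" "\<forall>x\<in>S. \<forall>y\<in>S. h (x+y) = h x + h y" "x \<in> S"
  shows "h (zmul k x) = zmul k (h x)"
proof -
  have h0: "h 0 = 0" using assms(1,2) unfolding subgrp_def by (metis add_0 add_left_imp_eq add.right_neutral)
  have hm: "h (-y) = - h y" if "y \<in> S" for y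
  proof -
    have "h (y + -y) = h y + h (-y)" using assms(1,2) that unfolding subgrp_def by blast
    then show ?thesis using h0 by (simp add: add_eq_0_iff2)
  qed
  show ?thesis
  proof (induction k rule: int_induct[where k=0])
    case base then show ?case using h0 by simp
  next
    case (step1 i) then show ?case using assms subgrp_zmul[OF assms(1)]
      by (simp add: zmul_succ)
  next
    case (step2 i)
    have "h (zmul i x + - x) = h (zmul i x) + h (-x)" using assms subgrp_zmul[OF assms(1)]
      unfolding subgrp_def by blast
    then show ?case using step2 hm[OF assms(3)] by (simp add: zmul_pred)
  qed
qed

context
  fixes R :: "rat set"
  assumes sub: "rat_subring R"
begin

lemma R_1: "1 \<in> R" using sub by (simp add: rat_subring_def)
lemma R_add: "r \<in> R \<Longrightarrow> s \<in> R \<Longrightarrow> r + s \<in> R" using sub by (simp add: rat_subring_def)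
lemma R_mult: "r \<in> R \<Longrightarrow> s \<in> R \<Longrightarrow> r * s \<in> R" using sub by (simp add: rat_subring_def)
lemma R_uminus: "r \<in> R \<Longrightarrow> - r \<in> R" using sub by (simp add: rat_subring_def)
lemma R_0: "0 \<in> R" using R_add[OF R_1 R_uminus[OF R_1]] by simp
lemma R_diff: "r \<in> R \<Longrightarrow> s \<in> R \<Longrightarrow> r - s \<in> R" using R_add R_uminus by fastforce
lemma R_int: "of_int k \<in> R"
proof (induction k rule: int_induct[where k=0])
  case base then show ?case using R_0 by simp
next
  case (step1 i) then show ?case using R_add[OF _ R_1] by simp
next
  case (step2 i) then show ?case using R_diff[OF _ R_1] by simp
qed

context
  fixes smul :: "rat \<Rightarrow> 'a::ab_group_add \<Rightarrow> 'a"
  assumes rm: "rmodule R smul"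
begin

lemma smul_add_right: "r \<in> R \<Longrightarrow> smul r (x + y) = smul r x + smul r y"
  using rm R_1 unfolding rmodule_def by blast
lemma smul_add_left: "r \<in> R \<Longrightarrow> s \<in> R \<Longrightarrow> smul (r + s) x = smul r x + smul s x"
  using rm unfolding rmodule_def by blast
lemma smul_mult: "r \<in> R \<Longrightarrow> s \<in> R \<Longrightarrow> smul (r * s) x = smul r (smul s x)"
  using rm unfolding rmodule_def by blast
lemma smul_one: "smul 1 x = x"
  using rm R_1 unfolding rmodule_def by blast
lemma smul_zero_left: "smul 0 x = 0"
  using smul_add_left[OF R_0 R_0, of x] by simp
lemma smul_zero_right: "r \<in> R \<Longrightarrow> smul r 0 = 0"
  using smul_add_right[of r 0 0] by simp
lemma smul_int: "smul (of_int k) x = zmul k x"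
proof (induction k rule: int_induct[where k=0])
  case base then show ?case using smul_zero_left by simp
next
  case (step1 i) then show ?case using smul_add_left[OF R_int R_1, of i x] smul_one
    by (simp add: zmul_succ)
next
  case (step2 i)
  have "smul (of_int (i-1) + 1) x = smul (of_int (i-1)) x + x"
    using smul_add_left[OF R_int R_1, of "i-1" x] smul_one by simp
  then show ?case using step2 by (simp add: zmul_pred eq_diff_eq)
qed
lemma smul_minus_right: "r \<in> R \<Longrightarrow> smul r (-x) = - smul r x"
  using smul_add_right[of r x "-x"] smul_zero_right by (simp add: add_eq_0_iff2)
lemma smul_diff_right: "r \<in> R \<Longrightarrow> smul r (x - y) = smul r x - smul r y"
  using smul_add_right[of r x "-y"] smul_minus_right[of r y] by simp
lemma smul_zmul: "r \<in> R \<Longrightarrow> smul r (zmul k x) = zmul k (smul r x)"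
  using smul_mult[OF _ R_int, of r k x] smul_mult[OF R_int, of r k x] smul_int
  by (simp add: mult.commute)
lemma smul_sum: "r \<in> R \<Longrightarrow> smul r (sum f A) = sum (\<lambda>a. smul r (f a)) A"
  by (induction A rule: infinite_finite_induct) (simp_all add: smul_zero_right smul_add_right)
lemma smul_frac: "r \<in> R \<Longrightarrow> r = of_int a / of_int b \<Longrightarrow> b \<noteq> 0 \<Longrightarrow> zmul b (smul r x) = zmul a x"
proof -
  assume a: "r \<in> R" "r = of_int a / of_int b" "b \<noteq> 0"
  have "zmul b (smul r x) = smul (of_int b * r) x" using smul_mult[OF R_int a(1)] smul_int by simp
  also have "of_int b * r = of_int a" using a by simp
  finally show ?thesis using smul_int by simp
qed

lemma rat_frac: "\<exists>a b. b > 0 \<and> (r::rat) = of_int a / of_int b"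
  by (metis prod.exhaust quotient_of_denom_pos quotient_of_div)

lemma rspan_0: "0 \<in> rspan R smul S"
  unfolding rspan_def by (rule CollectI, rule exI[of _ "{}"]) simp

lemma rspan_base: "s \<in> S \<Longrightarrow> s \<in> rspan R smul S"
  unfolding rspan_def using R_1 smul_one by (intro CollectI exI[of _ "{s}"] exI[of _ "\<lambda>_. 1"]) auto

lemma rspan_mono: "S \<subseteq> S' \<Longrightarrow> rspan R smul S \<subseteq> rspan R smul S'"
  unfolding rspan_def by blast

lemma rspan_add:
  assumes "x \<in> rspan R smul S" "y \<in> rspan R smul S"
  shows "x + y \<in> rspan R smul S"
proof -
  obtain T1 c1 where 1: "finite T1" "T1 \<subseteq> S" "\<forall>t\<in>T1. c1 t \<in> R" "x = (\<Sum>t\<in>T1. smul (c1 t) t)"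
    using assms(1) unfolding rspan_def by blast
  obtain T2 c2 where 2: "finite T2" "T2 \<subseteq> S" "\<forall>t\<in>T2. c2 t \<in> R" "y = (\<Sum>t\<in>T2. smul (c2 t) t)"
    using assms(2) unfolding rspan_def by blast
  define d1 where "d1 t = (if t \<in> T1 then c1 t else 0)" for t
  define d2 where "d2 t = (if t \<in> T2 then c2 t else 0)" for t
  have R1: "d1 t \<in> R" for t using 1 R_0 by (simp add: d1_def)
  have R2: "d2 t \<in> R" for t using 2 R_0 by (simp add: d2_def)
  have x: "x = (\<Sum>t\<in>T1 \<union> T2. smul (d1 t) t)"
    unfolding 1(4) by (rule sum.mono_neutral_cong_left) (auto simp: 1 2 d1_def smul_zero_left)
  have y: "y = (\<Sum>t\<in>T1 \<union> T2. smul (d2 t) t)"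
    unfolding 2(4) by (rule sum.mono_neutral_cong_left) (auto simp: 1 2 d2_def smul_zero_left)
  have "x + y = (\<Sum>t\<in>T1 \<union> T2. smul (d1 t + d2 t) t)"
    unfolding x y sum.distrib[symmetric] using smul_add_left[OF R1 R2] by simp
  moreover have "finite (T1 \<union> T2)" "T1 \<union> T2 \<subseteq> S" "\<forall>t\<in>T1 \<union> T2. d1 t + d2 t \<in> R"
    using 1(1,2) 2(1,2) R_add[OF R1 R2] by auto
  ultimately show ?thesis unfolding rspan_def by (intro CollectI exI conjI) (assumption | rule refl)+
qed

lemma rspan_smul:
  assumes "r \<in> R" "x \<in> rspan R smul S"
  shows "smul r x \<in> rspan R smul S"
proof -
  obtain T c where 1: "finite T" "T \<subseteq> S" "\<forall>t\<in>T. c t \<in> R" "x = (\<Sum>t\<in>T. smul (c t) t)"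
    using assms(2) unfolding rspan_def by blast
  have "smul r x = (\<Sum>t\<in>T. smul (r * c t) t)"
    unfolding 1(4) smul_sum[OF assms(1)] using smul_mult[OF assms(1)] 1(3) by simp
  moreover have "\<forall>t\<in>T. r * c t \<in> R" using 1(3) R_mult[OF assms(1)] by simp
  ultimately show ?thesis unfolding rspan_def using 1(1,2)
    by (intro CollectI exI conjI) (assumption | rule refl)+
qed

lemma rspan_zmul: "x \<in> rspan R smul S \<Longrightarrow> zmul k x \<in> rspan R smul S"
  using rspan_smul[OF R_int] smul_int by metis

lemma rspan_uminus: "x \<in> rspan R smul S \<Longrightarrow> - x \<in> rspan R smul S"
  using rspan_zmul[of x S "-1"] by (simp add: zmul_minus_left)

lemma rspan_subgrp: "subgrp (rspan R smul S)"
  unfolding subgrp_def using rspan_0 rspan_add rspan_uminus by blast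

lemma rspan_diff: "x \<in> rspan R smul S \<Longrightarrow> y \<in> rspan R smul S \<Longrightarrow> x - y \<in> rspan R smul S"
  using subgrp_diff[OF rspan_subgrp] by blast

lemma rspan_rsub: "rsubmodule R smul (rspan R smul S)"
  unfolding rsubmodule_def using rspan_0 rspan_add rspan_smul by blast

lemma rsub_subgrp: "rsubmodule R smul M \<Longrightarrow> subgrp M"
  unfolding rsubmodule_def subgrp_def using R_int[of "-1"] smul_int[of "-1"]
  by (metis of_int_minus of_int_1 zmul_1 zmul_minus_left)

lemma rsub_sum: "rsubmodule R smul M \<Longrightarrow> (\<forall>a\<in>A. f a \<in> M) \<Longrightarrow> sum f A \<in> M"
  by (induction A rule: infinite_finite_induct) (auto simp: rsubmodule_def)

lemma rspan_sub:
  assumes a: "rsubmodule R smul M" "S \<subseteq> M"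
  shows "rspan R smul S \<subseteq> M"
proof
  fix y assume "y \<in> rspan R smul S"
  then obtain T c where 1: "finite T" "T \<subseteq> S" "\<forall>t\<in>T. c t \<in> R" "y = (\<Sum>t\<in>T. smul (c t) t)"
    unfolding rspan_def by blast
  have "\<forall>t\<in>T. smul (c t) t \<in> M" using a(1,2) 1(2,3) unfolding rsubmodule_def by blast
  then show "y \<in> M" using rsub_sum[OF a(1), of T "\<lambda>t. smul (c t) t"] 1(4) by simp
qed

lemma rspan_insert:
  assumes "y \<in> rspan R smul (insert x T)"
  shows "\<exists>l r. l \<in> rspan R smul T \<and> r \<in> R \<and> y = l + smul r x"
proof -
  obtain T1 c where 1: "finite T1" "T1 \<subseteq> insert x T" "\<forall>t\<in>T1. c t \<in> R" "y = (\<Sum>t\<in>T1. smul (c t) t)"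
    using assms unfolding rspan_def by blast
  show ?thesis
  proof (cases "x \<in> T1")
    case True
    have "y = smul (c x) x + (\<Sum>t\<in>T1 - {x}. smul (c t) t)"
      unfolding 1(4) using sum.remove[OF 1(1) True] by simp
    moreover have "T1 - {x} \<subseteq> T" using 1(2) by blast
    then have "(\<Sum>t\<in>T1 - {x}. smul (c t) t) \<in> rspan R smul T"
      unfolding rspan_def using 1(1,3) by blast
    ultimately show ?thesis using 1(3) True by (metis add.commute)
  next
    case False
    have "T1 \<subseteq> T" using 1(2) False by blast
    then have "y \<in> rspan R smul T"
      unfolding rspan_def using 1(1,3,4) by blast
    then show ?thesis using R_0 smul_zero_left[of x] by (intro exI[of _ y] exI[of _ 0]) simp
  qed
qed

lemma rspan_insertI:
  "l \<in> rspan R smul T \<Longrightarrow> r \<in> R \<Longrightarrow> l + smul r x \<in> rspan R smul (insert x T)"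
proof -
  assume a: "l \<in> rspan R smul T" "r \<in> R"
  have "l \<in> rspan R smul (insert x T)" using a(1) rspan_mono[of T "insert x T"] by blast
  moreover have "smul r x \<in> rspan R smul (insert x T)" using rspan_smul[OF a(2) rspan_base[of x "insert x T"]] by simp
  ultimately show ?thesis by (rule rspan_add)
qed

end
end

declare of_int_power[simp del]

lemma nondiv:
  fixes R :: "rat set"
  assumes tf: "torsion_free TYPE('g::ab_group_add)" and nuc: "is_nucleus R TYPE('g)"
    and m0: "m \<noteq> 0" and mR: "1 / of_int m \<notin> R"
  shows "\<exists>g::'g. \<forall>y. zmul m y \<noteq> g"
proof (rule ccontr)
  assume "\<not> ?thesis"
  then have dv: "\<forall>g::'g. \<exists>y. zmul m y = g" by blast
  have sub: "rat_subring R" using nuc unfolding is_nucleus_def by blast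
  obtain smul :: "rat \<Rightarrow> 'g \<Rightarrow> 'g" where rm: "rmodule R smul"
    using nuc unfolding is_nucleus_def is_module_over_def by blast
  have mk0: "m ^ k \<noteq> 0" for k using m0 by simp
  have dvk: "\<exists>y. zmul (m ^ k) y = g" for k and g :: 'g
  proof (induction k arbitrary: g)
    case 0 then show ?case by simp
  next
    case (Suc k)
    obtain y1 where "zmul m y1 = g" using dv by blast
    moreover obtain y2 where "zmul (m^k) y2 = y1" using Suc by blast
    ultimately show ?case by (metis power_Suc zmul_mult)
  qed
  define R' where "R' = {q. \<exists>r\<in>R. \<exists>k::nat. q = r / of_int (m ^ k)}"
  define sm where "sm q x = (THE y. \<exists>r k. r \<in> R \<and> q = r / of_int (m ^ k) \<and> zmul (m ^ k) y = smul r x)" for q x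
  have W: "sm q x = y" if "r \<in> R" "q = r / of_int (m ^ k)" "zmul (m ^ k) y = smul r x" for q x y r k
    unfolding sm_def
  proof (rule the_equality)
    show "\<exists>r k. r \<in> R \<and> q = r / of_int (m ^ k) \<and> zmul (m ^ k) y = smul r x" using that by blast
  next
    fix y' assume "\<exists>r k. r \<in> R \<and> q = r / of_int (m ^ k) \<and> zmul (m ^ k) y' = smul r x"
    then obtain r' k' where r': "r' \<in> R" "q = r' / of_int (m ^ k')" "zmul (m ^ k') y' = smul r' x" by blast
    have eq: "r * of_int (m ^ k') = r' * of_int (m ^ k)" using that(2) r'(2) mk0
      by (simp add: field_simps)
    have "zmul (m ^ (k + k')) y = zmul (m ^ k') (smul r x)"
      using that(3) by (metis power_add mult.commute zmul_mult)
    also have "\<dots> = smul (of_int (m ^ k') * r) x" using smul_mult[OF sub rm R_int[OF sub] that(1)] smul_int[OF sub rm] by simp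
    also have "\<dots> = smul (of_int (m ^ k) * r') x" using eq by (simp add: mult.commute)
    also have "\<dots> = zmul (m ^ k) (smul r' x)" using smul_mult[OF sub rm R_int[OF sub] r'(1)] smul_int[OF sub rm] by simp
    also have "\<dots> = zmul (m ^ (k + k')) y'" using r'(3) by (metis power_add zmul_mult)
    finally show "y' = y" using torsion_free_zmul_cancel[OF tf _ mk0] by metis
  qed
  have E: "zmul (m ^ k) (sm (r / of_int (m ^ k)) x) = smul r x" if "r \<in> R" for r k x
  proof -
    obtain y where y: "zmul (m ^ k) y = smul r x" using dvk by blast
    then show ?thesis using W[OF that refl y] by simp
  qed
  have sub': "rat_subring R'"
    unfolding rat_subring_def
  proof (intro conjI ballI)
    show "1 \<in> R'" unfolding R'_def using R_1[OF sub] by (intro CollectI bexI[of _ 1] exI[of _ 0]) auto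
  next
    fix a b assume "a \<in> R'" "b \<in> R'"
    then obtain r1 k1 r2 k2 where a: "r1 \<in> R" "a = r1 / of_int (m ^ k1)" and b: "r2 \<in> R" "b = r2 / of_int (m ^ k2)"
      unfolding R'_def by blast
    have "a + b = (r1 * of_int (m^k2) + r2 * of_int (m^k1)) / of_int (m ^ (k1+k2))"
      unfolding a(2) b(2) using mk0 by (simp add: field_simps power_add)
    moreover have "r1 * of_int (m^k2) + r2 * of_int (m^k1) \<in> R"
      using a b R_add[OF sub] R_mult[OF sub] R_int[OF sub] by metis
    ultimately show "a + b \<in> R'" unfolding R'_def by blast
    have "a * b = (r1 * r2) / of_int (m ^ (k1+k2))"
      unfolding a(2) b(2) using mk0 by (simp add: field_simps power_add)
    then show "a * b \<in> R'" unfolding R'_def using R_mult[OF sub a(1) b(1)] by blast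
    have "- a = (- r1) / of_int (m ^ k1)" using a by simp
    then show "- a \<in> R'" unfolding R'_def using R_uminus[OF sub a(1)] by blast
  qed
  have rm': "rmodule R' sm"
    unfolding rmodule_def
  proof (intro ballI allI conjI)
    fix a b x y assume "a \<in> R'" "b \<in> R'"
    then obtain r1 k1 r2 k2 where a: "r1 \<in> R" "a = r1 / of_int (m ^ k1)" and b: "r2 \<in> R" "b = r2 / of_int (m ^ k2)"
      unfolding R'_def by blast
    show "sm a (x + y) = sm a x + sm a y"
      using E[OF a(1), of k1] smul_add_right[OF sub rm a(1)]
      by (intro W[OF a(1) a(2)]) (simp add: zmul_add_right a(2))
    have eq: "a + b = (r1 * of_int (m^k2) + r2 * of_int (m^k1)) / of_int (m ^ (k1+k2))"
      unfolding a(2) b(2) using mk0 by (simp add: field_simps power_add)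
    have inR: "r1 * of_int (m^k2) + r2 * of_int (m^k1) \<in> R"
      using a b R_add[OF sub] R_mult[OF sub] R_int[OF sub] by metis
    have "zmul (m ^ (k1+k2)) (sm a x + sm b x) = zmul (m^k2) (smul r1 x) + zmul (m^k1) (smul r2 x)"
      using E[OF a(1), of k1 x] E[OF b(1), of k2 x] a(2) b(2)
      by (simp add: zmul_add_right power_add zmul_mult mult.commute)
      (metis mult.commute zmul_mult)
    also have "\<dots> = smul (r1 * of_int (m^k2) + r2 * of_int (m^k1)) x"
      using smul_mult[OF sub rm R_int[OF sub] a(1)] smul_mult[OF sub rm R_int[OF sub] b(1)] smul_int[OF sub rm]
        smul_add_left[OF sub rm R_mult[OF sub a(1) R_int[OF sub]] R_mult[OF sub b(1) R_int[OF sub]]]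
      by (simp add: mult.commute)
    finally show "sm (a + b) x = sm a x + sm b x" by (rule W[OF inR eq])
    have eq2: "a * b = (r1 * r2) / of_int (m ^ (k1+k2))"
      unfolding a(2) b(2) using mk0 by (simp add: field_simps power_add)
    have "zmul (m ^ (k1+k2)) (sm a (sm b x)) = zmul (m^k2) (smul r1 (sm b x))"
      using E[OF a(1), of k1 "sm b x"] a(2) by (metis power_add zmul_mult mult.commute)
    also have "\<dots> = smul r1 (zmul (m^k2) (sm b x))" using smul_zmul[OF sub rm a(1)] by simp
    also have "\<dots> = smul (r1 * r2) x" using E[OF b(1), of k2 x] b(2) smul_mult[OF sub rm a(1) b(1)] by simp
    finally show "sm (a * b) x = sm a (sm b x)" by (rule W[OF R_mult[OF sub a(1) b(1)] eq2])
    show "sm 1 x = x" using W[OF R_1[OF sub], of 1 0 x x] smul_one[OF sub rm] by simp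
  qed
  have "R' \<subseteq> R" using nuc sub' rm' unfolding is_nucleus_def is_module_over_def by blast
  moreover have "1 / of_int m \<in> R'" unfolding R'_def using R_1[OF sub]
    by (intro CollectI bexI[of _ 1] exI[of _ 1]) auto
  ultimately show False using mR by blast
qed

declare of_int_power[simp]

locale cocy =
  fixes S :: "'a::ab_group_add set" and F :: "'a \<Rightarrow> 'a \<Rightarrow> 'b::ab_group_add"
  assumes sg: "subgrp S"
    and sym: "\<And>u v. u \<in> S \<Longrightarrow> v \<in> S \<Longrightarrow> F u v = F v u"
    and coc: "\<And>u v w. u \<in> S \<Longrightarrow> v \<in> S \<Longrightarrow> w \<in> S \<Longrightarrow> F u v + F (u+v) w = F u (v+w) + F v w"
begin

lemma S_add: "u \<in> S \<Longrightarrow> v \<in> S \<Longrightarrow> u + v \<in> S" using sg by (simp add: subgrp_def)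
lemma S_0: "0 \<in> S" using sg by (simp add: subgrp_def)

lemma F_0: "u \<in> S \<Longrightarrow> F u 0 = F 0 0"
  using coc[of u 0 0] S_0 by simp

lemma T4: "a \<in> S \<Longrightarrow> b \<in> S \<Longrightarrow> c \<in> S \<Longrightarrow> d \<in> S \<Longrightarrow>
  F a b + F (a+b) c + F (a+b+c) d = F c d + F b (c+d) + F a (b+c+d)"
proof -
  assume a: "a \<in> S" "b \<in> S" "c \<in> S" "d \<in> S"
  have 1: "F (a+b) c + F (a+b+c) d = F (a+b) (c+d) + F c d" using coc[of "a+b" c d] a S_add by simp
  have 2: "F a b + F (a+b) (c+d) = F a (b+(c+d)) + F b (c+d)" using coc[of a b "c+d"] a S_add by simp
  have "F a b + F (a+b) c + F (a+b+c) d = F a b + F (a+b) (c+d) + F c d" using 1 by (simp add: add.assoc)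
  also have "\<dots> = F a (b+(c+d)) + F b (c+d) + F c d" using 2 by simp
  finally show ?thesis by (simp add: algebra_simps)
qed

lemma T4_swap12: "a \<in> S \<Longrightarrow> b \<in> S \<Longrightarrow> c \<in> S \<Longrightarrow> d \<in> S \<Longrightarrow>
  F a b + F (a+b) c + F (a+b+c) d = F b a + F (b+a) c + F (b+a+c) d"
  using sym by (simp add: add.commute)

lemma T4_swap23: "a \<in> S \<Longrightarrow> b \<in> S \<Longrightarrow> c \<in> S \<Longrightarrow> d \<in> S \<Longrightarrow>
  F a b + F (a+b) c + F (a+b+c) d = F a c + F (a+c) b + F (a+c+b) d"
proof -
  assume a: "a \<in> S" "b \<in> S" "c \<in> S" "d \<in> S"
  have "F a b + F (a+b) c = F a (b+c) + F b c" using coc a by blast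
  moreover have "F a c + F (a+c) b = F a (c+b) + F c b" using coc a by blast
  ultimately show ?thesis using sym a by (simp add: add.commute add.left_commute)
qed

lemma T4_swap34: "a \<in> S \<Longrightarrow> b \<in> S \<Longrightarrow> c \<in> S \<Longrightarrow> d \<in> S \<Longrightarrow>
  F a b + F (a+b) c + F (a+b+c) d = F a b + F (a+b) d + F (a+b+d) c"
proof -
  assume a: "a \<in> S" "b \<in> S" "c \<in> S" "d \<in> S"
  have "F (a+b) c + F (a+b+c) d = F (a+b) (c+d) + F c d" using coc a S_add by blast
  moreover have "F (a+b) d + F (a+b+d) c = F (a+b) (d+c) + F d c" using coc a S_add by blast
  ultimately show ?thesis using sym a by (simp add: add.commute add.left_commute add.assoc)
qed

lemma I1: "s \<in> S \<Longrightarrow> t \<in> S \<Longrightarrow> r \<in> S \<Longrightarrow> c \<in> S \<Longrightarrow>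
  F s t + F (s+t) c + F (s+t+c) r = F t r + F s (t+r) + F (s+t+r) c"
proof -
  assume a: "s \<in> S" "t \<in> S" "r \<in> S" "c \<in> S"
  have "F s t + F (s+t) c + F (s+t+c) r = F s t + F (s+t) r + F (s+t+r) c" using T4_swap34[OF a(1,2,4,3)] .
  also have "\<dots> = F t r + F s (t+r) + F (s+t+r) c" using coc[OF a(1,2,3)] by (simp add: add.commute)
  finally show ?thesis .
qed

lemma I2: "s \<in> S \<Longrightarrow> t \<in> S \<Longrightarrow> r \<in> S \<Longrightarrow> c \<in> S \<Longrightarrow>
  F s t + F (s+t) r + F (s+t+r) c = F s (t+r+c) + F t r + F (t+r) c"
proof -
  assume a: "s \<in> S" "t \<in> S" "r \<in> S" "c \<in> S"
  have "F s t + F (s+t) r + F (s+t+r) c = F r c + F t (r+c) + F s (t+r+c)" using T4[OF a] .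
  also have "\<dots> = F s (t+r+c) + F t r + F (t+r) c" using coc[OF a(2,3,4)] by (simp add: algebra_simps)
  finally show ?thesis .
qed

definition Fp :: "'a \<Rightarrow> int \<Rightarrow> 'a \<Rightarrow> int \<Rightarrow> 'a \<Rightarrow> int \<Rightarrow> 'b" where
  "Fp c n s k t l = F s t + (if n \<le> k + l then F (s+t) c - F 0 0 else 0)"

lemma carry:
  assumes "s \<in> S" "t \<in> S" "r \<in> S" "c \<in> S" "0 \<le> k" "k < n" "0 \<le> l" "l < n" "0 \<le> m" "m < n"
  shows "Fp c n s k t l + Fp c n (if k+l < n then s+t else s+t+c) (if k+l<n then k+l else k+l-n) r m
       = Fp c n s k (if l+m < n then t+r else t+r+c) (if l+m<n then l+m else l+m-n) + Fp c n t l r m"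
proof (cases "k+l < n")
  case kl: True
  show ?thesis
  proof (cases "l+m < n")
    case True
    have e: "F s t + F (s+t) r = F s (t+r) + F t r" using coc assms by blast
    show ?thesis using kl True e unfolding Fp_def by (simp add: algebra_simps)
  next
    case False
    have e: "F s t + F (s+t) r + F (s+t+r) c = F s (t+r+c) + F t r + F (t+r) c" using I2 assms by blast
    have "n \<le> k+l+m" "\<not> n \<le> k + (l+m-n)" using kl False assms by auto
    then show ?thesis using kl False e unfolding Fp_def by (simp add: algebra_simps)
  qed
next
  case kl: False
  show ?thesis
  proof (cases "l+m < n")
    case True
    have e: "F s t + F (s+t) c + F (s+t+c) r = F t r + F s (t+r) + F (s+t+r) c" using I1 assms by blast
    have "n \<le> k+(l+m)" "\<not> n \<le> k+l-n+m" using kl True assms by auto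
    then show ?thesis using kl True e unfolding Fp_def by (simp add: algebra_simps)
  next
    case False
    have e: "F s t + F (s+t) c + F (s+t+c) r = F s (t+r+c) + F t r + F (t+r) c"
      using I1[of s t r c] I2[of s t r c] assms coc[of s t r] by (simp add: algebra_simps)
    have "(n \<le> k+l-n+m) = (n \<le> k+(l+m-n))" by auto
    then show ?thesis using kl False e unfolding Fp_def by (simp add: algebra_simps)
  qed
qed

end

context cocy
begin

lemma S_neg: "u \<in> S \<Longrightarrow> -u \<in> S" using sg by (simp add: subgrp_def)
lemma S_diff: "u \<in> S \<Longrightarrow> v \<in> S \<Longrightarrow> u - v \<in> S" using subgrp_diff[OF sg] by blast
lemma S_zmul: "u \<in> S \<Longrightarrow> zmul k u \<in> S" using subgrp_zmul[OF sg] by blast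

lemma S'_subgrp: "subgrp {x. \<exists>s\<in>S. \<exists>k. x = s + zmul k a}"
  unfolding subgrp_def
proof (intro conjI ballI)
  show "0 \<in> {x. \<exists>s\<in>S. \<exists>k. x = s + zmul k a}" using S_0 by (intro CollectI bexI[of _ 0] exI[of _ 0]) auto
next
  fix x y assume "x \<in> {x. \<exists>s\<in>S. \<exists>k. x = s + zmul k a}" "y \<in> {x. \<exists>s\<in>S. \<exists>k. x = s + zmul k a}"
  then obtain s k t l where "s \<in> S" "t \<in> S" "x = s + zmul k a" "y = t + zmul l a" by blast
  then show "x + y \<in> {x. \<exists>s\<in>S. \<exists>k. x = s + zmul k a}"
    using S_add by (intro CollectI bexI[of _ "s+t"] exI[of _ "k+l"]) (auto simp: zmul_add_left algebra_simps)
  show "- x \<in> {x. \<exists>s\<in>S. \<exists>k. x = s + zmul k a}"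
    using S_neg \<open>s \<in> S\<close> \<open>x = s + zmul k a\<close>
    by (intro CollectI bexI[of _ "-s"] exI[of _ "-k"]) (auto simp: zmul_minus_left)
qed

lemma ext_step:
  assumes sX: "subgrp X" and vals: "\<forall>u\<in>S. \<forall>v\<in>S. F u v \<in> X" and aS: "a \<notin> S"
  shows "\<exists>S' F'. subgrp S' \<and> S \<subseteq> S' \<and> a \<in> S' \<and> cocy S' F' \<and> (\<forall>u\<in>S'. \<forall>v\<in>S'. F' u v \<in> X)
     \<and> (\<forall>u\<in>S. \<forall>v\<in>S. F' u v = F u v)"
proof -
  define S' where "S' = {x. \<exists>s\<in>S. \<exists>k. x = s + zmul k a}"
  have sg': "subgrp S'" unfolding S'_def by (rule S'_subgrp)
  have SS': "S \<subseteq> S'" unfolding S'_def by (force intro: exI[of _ 0])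
  have aS': "a \<in> S'" unfolding S'_def using S_0 by (force intro: exI[of _ 1])
  have Xadd: "u \<in> X \<Longrightarrow> v \<in> X \<Longrightarrow> u + v \<in> X" for u v using sX by (simp add: subgrp_def)
  have Xdiff: "u \<in> X \<Longrightarrow> v \<in> X \<Longrightarrow> u - v \<in> X" for u v using subgrp_diff[OF sX] by blast
  show ?thesis
  proof (cases "\<forall>k. zmul k a \<in> S \<longrightarrow> k = 0")
    case True
    have uniq: "s = t \<and> k = l" if "s \<in> S" "t \<in> S" "s + zmul k a = t + zmul l a" for s t k l
    proof -
      have "zmul (k - l) a = t - s" using that(3) by (simp add: zmul_diff_left algebra_simps)
      then have "k - l = 0" using True S_diff[OF that(2,1)] by metis
      then have "k = l" by simp
      then show ?thesis using that(3) by simp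
    qed
    define pS where "pS x = (THE s. s \<in> S \<and> (\<exists>k. x = s + zmul k a))" for x
    have pS_eq: "pS (s + zmul k a) = s" if "s \<in> S" for s k
      unfolding pS_def using that uniq by (intro the_equality) blast+
    have pS_S: "pS x \<in> S" "\<exists>k. x = pS x + zmul k a" if "x \<in> S'" for x
      using that pS_eq unfolding S'_def by auto
    define F' where "F' x y = F (pS x) (pS y)" for x y
    have pS_add: "pS (x + y) = pS x + pS y" if xy: "x \<in> S'" "y \<in> S'" for x y
    proof -
      obtain k l where "x = pS x + zmul k a" "y = pS y + zmul l a" using pS_S xy by blast
      then have "x + y = (pS x + pS y) + zmul (k+l) a" by (metis add.assoc add.left_commute zmul_add_left)
      then show ?thesis using pS_eq S_add pS_S xy by metis
    qed
    have "cocy S' F'"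
      unfolding cocy_def F'_def using sg' pS_S pS_add sym coc by (auto simp: subgrp_def)
    moreover have "\<forall>u\<in>S'. \<forall>v\<in>S'. F' u v \<in> X" unfolding F'_def using vals pS_S by blast
    moreover have "\<forall>u\<in>S. \<forall>v\<in>S. F' u v = F u v" unfolding F'_def using pS_eq[of _ 0] by simp
    ultimately show ?thesis using sg' SS' aS' by blast
  next
    case False
    then obtain k0 where k0: "zmul k0 a \<in> S" "k0 \<noteq> 0" by blast
    have exj: "\<exists>j::nat. j > 0 \<and> zmul (int j) a \<in> S"
    proof (cases "k0 > 0")
      case True then show ?thesis using k0 by (intro exI[of _ "nat k0"]) auto
    next
      case False then show ?thesis using k0 S_neg[of "zmul k0 a"]
        by (intro exI[of _ "nat (-k0)"]) (auto simp: zmul_minus_left)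
    qed
    define j0 where "j0 = (LEAST j::nat. j > 0 \<and> zmul (int j) a \<in> S)"
    have j0: "j0 > 0" "zmul (int j0) a \<in> S" using LeastI_ex[OF exj] unfolding j0_def by auto
    have j0min: "\<not> (j > 0 \<and> zmul (int j) a \<in> S)" if "j < j0" for j
      using not_less_Least[of j "\<lambda>j. j > 0 \<and> zmul (int j) a \<in> S"] that unfolding j0_def by blast
    define n where "n = int j0"
    define c where "c = zmul n a"
    have n0: "n > 0" using j0 by (simp add: n_def)
    have cS: "c \<in> S" using j0 by (simp add: c_def n_def)
    have dvd: "k mod n = 0" if "zmul k a \<in> S" for k
    proof (rule ccontr)
      assume ne: "k mod n \<noteq> 0"
      have "k = (k div n) * n + k mod n" by simp
      then have "zmul (k mod n) a = zmul k a - zmul (k div n) c"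
        unfolding c_def by (metis add_diff_cancel_left' zmul_add_left zmul_mult)
      then have "zmul (k mod n) a \<in> S" using that S_diff S_zmul cS by simp
      moreover have "k mod n \<ge> 0" "k mod n < n" using n0 by auto
      moreover have "k mod n > 0" using ne calculation(2) by linarith
      ultimately have "nat (k mod n) < j0" "nat (k mod n) > 0" "zmul (int (nat (k mod n))) a \<in> S"
        unfolding n_def by auto
      then show False using j0min by blast
    qed
    have uniq: "s = t \<and> k = l" if "s \<in> S" "t \<in> S" "s + zmul k a = t + zmul l a"
      "0 \<le> k" "k < n" "0 \<le> l" "l < n" for s t k l
    proof -
      have "zmul (k - l) a = t - s" using that(3) by (simp add: zmul_diff_left algebra_simps)
      then have "(k - l) mod n = 0" using dvd S_diff[OF that(2,1)] by simp
      then have "n dvd (k - l)" by (simp add: dvd_eq_mod_eq_0)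
      then have "k - l = 0" using dvd_imp_le_int[of "k - l" n] that(4-7) by fastforce
      then have "k = l" by simp
      then show ?thesis using that(3) by simp
    qed
    have repx: "\<exists>s\<in>S. \<exists>k. 0 \<le> k \<and> k < n \<and> x = s + zmul k a" if xS: "x \<in> S'" for x
    proof -
      obtain s k where sk: "s \<in> S" "x = s + zmul k a" using xS unfolding S'_def by blast
      have "zmul k a = zmul (k div n) c + zmul (k mod n) a"
        unfolding c_def by (metis div_mult_mod_eq zmul_add_left zmul_mult)
      then have "x = (s + zmul (k div n) c) + zmul (k mod n) a" using sk by (simp add: add.assoc)
      then show ?thesis using sk(1) S_add S_zmul cS n0 by (intro bexI[of _ "s + zmul (k div n) c"] exI[of _ "k mod n"]) auto
    qed
    define pS where "pS x = (THE s. s \<in> S \<and> (\<exists>k. 0 \<le> k \<and> k < n \<and> x = s + zmul k a))" for x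
    define pK where "pK x = (THE k. 0 \<le> k \<and> k < n \<and> (\<exists>s\<in>S. x = s + zmul k a))" for x
    have pS_eq: "pS (s + zmul k a) = s" if "s \<in> S" "0 \<le> k" "k < n" for s k
      unfolding pS_def using that uniq by (intro the_equality) blast+
    have pK_eq: "pK (s + zmul k a) = k" if "s \<in> S" "0 \<le> k" "k < n" for s k
      unfolding pK_def using that uniq by (intro the_equality) blast+
    have rep: "pS x \<in> S \<and> 0 \<le> pK x \<and> pK x < n \<and> x = pS x + zmul (pK x) a" if "x \<in> S'" for x
      using repx[OF that] pS_eq pK_eq by auto
    have addrep: "x + y = (if pK x + pK y < n then pS x + pS y else pS x + pS y + c)
                 + zmul (if pK x + pK y < n then pK x + pK y else pK x + pK y - n) a" if "x \<in> S'" "y \<in> S'" for x y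
    proof -
      have "x + y = (pS x + pS y) + zmul (pK x + pK y) a" using rep[OF that(1)] rep[OF that(2)]
        by (metis add.assoc add.left_commute zmul_add_left)
      moreover have "zmul (pK x + pK y) a = c + zmul (pK x + pK y - n) a"
        unfolding c_def by (metis add.commute diff_add_cancel zmul_add_left)
      ultimately show ?thesis by (simp add: add.assoc)
    qed
    have pS_add: "pS (x + y) = (if pK x + pK y < n then pS x + pS y else pS x + pS y + c)"
      and pK_add: "pK (x + y) = (if pK x + pK y < n then pK x + pK y else pK x + pK y - n)"
      if "x \<in> S'" "y \<in> S'" for x y
    proof -
      have in1: "(if pK x + pK y < n then pS x + pS y else pS x + pS y + c) \<in> S"
        using rep[OF that(1)] rep[OF that(2)] S_add cS by auto
      have in2: "0 \<le> (if pK x + pK y < n then pK x + pK y else pK x + pK y - n)"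
         "(if pK x + pK y < n then pK x + pK y else pK x + pK y - n) < n"
        using rep[OF that(1)] rep[OF that(2)] by auto
      show "pS (x + y) = (if pK x + pK y < n then pS x + pS y else pS x + pS y + c)"
        using pS_eq[OF in1 in2] addrep[OF that] by simp
      show "pK (x + y) = (if pK x + pK y < n then pK x + pK y else pK x + pK y - n)"
        using pK_eq[OF in1 in2] addrep[OF that] by simp
    qed
    define F' where "F' x y = Fp c n (pS x) (pK x) (pS y) (pK y)" for x y
    have "cocy S' F'"
      unfolding cocy_def
    proof (intro conjI allI impI)
      show "subgrp S'" by (rule sg')
    next
      fix u v assume "u \<in> S'" "v \<in> S'"
      then show "F' u v = F' v u" unfolding F'_def Fp_def using rep sym
        by (simp add: add.commute)
    next
      fix u v w assume uvw: "u \<in> S'" "v \<in> S'" "w \<in> S'"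
      show "F' u v + F' (u + v) w = F' u (v + w) + F' v w"
        unfolding F'_def pS_add[OF uvw(1,2)] pK_add[OF uvw(1,2)] pS_add[OF uvw(2,3)] pK_add[OF uvw(2,3)]
        using carry[of "pS u" "pS v" "pS w" c "pK u" n "pK v" "pK w"] rep[OF uvw(1)] rep[OF uvw(2)] rep[OF uvw(3)] cS
        by simp
    qed
    moreover have "\<forall>u\<in>S'. \<forall>v\<in>S'. F' u v \<in> X"
    proof (intro ballI)
      fix u v assume "u \<in> S'" "v \<in> S'"
      then have "F (pS u) (pS v) \<in> X" "F (pS u + pS v) c - F 0 0 \<in> X"
        using rep vals S_add cS S_0 Xdiff by auto
      then show "F' u v \<in> X" unfolding F'_def Fp_def using Xadd sX by (auto simp: subgrp_def)
    qed
    moreover have "\<forall>u\<in>S. \<forall>v\<in>S. F' u v = F u v"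
      unfolding F'_def Fp_def using pS_eq[of _ 0] pK_eq[of _ 0] n0 by simp
    ultimately show ?thesis using sg' SS' aS' by blast
  qed
qed

end

lemma cocy_cong:
  assumes "cocy S F" "\<forall>u\<in>S. \<forall>v\<in>S. G u v = F u v"
  shows "cocy S G"
proof -
  interpret cocy S F by (rule assms(1))
  show ?thesis unfolding cocy_def using sg sym coc S_add assms(2) by simp
qed

lemma ext_factor:
  fixes S0 :: "'a::ab_group_add set" and F0 :: "'a \<Rightarrow> 'a \<Rightarrow> 'b::ab_group_add" and X :: "'b set"
  assumes sX: "subgrp X" and c0: "cocy S0 F0" and v0: "\<forall>u\<in>S0. \<forall>v\<in>S0. F0 u v \<in> X"
  shows "\<exists>F. factor_set X F \<and> (\<forall>u\<in>S0. \<forall>v\<in>S0. F u v = F0 u v)"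
proof -
  define good where "good p \<longleftrightarrow> cocy (fst p) (snd p) \<and> S0 \<subseteq> fst p \<and>
     (\<forall>u\<in>fst p. \<forall>v\<in>fst p. snd p u v \<in> X) \<and> (\<forall>u\<in>S0. \<forall>v\<in>S0. snd p u v = F0 u v) \<and>
     (\<forall>u v. (u \<notin> fst p \<or> v \<notin> fst p) \<longrightarrow> snd p u v = 0)" for p :: "'a set \<times> ('a \<Rightarrow> 'a \<Rightarrow> 'b)"
  define A where "A = {p. good p}"
  define P where "P p q \<longleftrightarrow> fst p \<subseteq> fst q \<and> (\<forall>u\<in>fst p. \<forall>v\<in>fst p. snd q u v = snd p u v)"
    for p q :: "'a set \<times> ('a \<Rightarrow> 'a \<Rightarrow> 'b)"
  have po: "partial_order_on A (relation_of P A)"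
  proof (rule partial_order_on_relation_ofI)
    fix a assume "a \<in> A" then show "P a a" unfolding P_def by simp
  next
    fix a b c assume "P a b" "P b c" then show "P a c" unfolding P_def by (metis subsetD subset_trans)
  next
    fix a b assume ab: "a \<in> A" "b \<in> A" "P a b" "P b a"
    then have f: "fst a = fst b" unfolding P_def by blast
    have "snd a u v = snd b u v" for u v
    proof (cases "u \<in> fst a \<and> v \<in> fst a")
      case True then show ?thesis using ab(4) f unfolding P_def by auto
    next
      case False then show ?thesis using ab(1,2) f unfolding A_def good_def by auto
    qed
    then show "a = b" using f by (simp add: prod_eq_iff fun_eq_iff)
  qed
  have ch: "\<exists>u \<in> A. \<forall>a \<in> C. P a u" if C: "C \<in> Chains (relation_of P A)" for C
  proof (cases "C = {}")
    case True
    define F1 where "F1 u v = (if u \<in> S0 \<and> v \<in> S0 then F0 u v else 0)" for u v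
    have "cocy S0 F1" using cocy_cong[OF c0, of F1] by (simp add: F1_def)
    then have "good (S0, F1)" unfolding good_def using v0 by (simp add: F1_def)
    then show ?thesis using True unfolding A_def by blast
  next
    case False
    have CA: "C \<subseteq> A" using Chains_relation_of[OF C] .
    have cmp: "P p q \<or> P q p" if "p \<in> C" "q \<in> C" for p q
      using C that unfolding Chains_def relation_of_def by blast
    define SU where "SU = \<Union> (fst ` C)"
    define FU where "FU x y = (if \<exists>p\<in>C. x \<in> fst p \<and> y \<in> fst p
        then snd (SOME p. p \<in> C \<and> x \<in> fst p \<and> y \<in> fst p) x y else 0)" for x y
    have two: "\<exists>p\<in>C. x \<in> fst p \<and> y \<in> fst p" if xy: "x \<in> SU" "y \<in> SU" for x y
    proof -
      obtain p q where "p \<in> C" "q \<in> C" "x \<in> fst p" "y \<in> fst q" using xy unfolding SU_def by blast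
      then show ?thesis using cmp[of p q] unfolding P_def by blast
    qed
    have three: "\<exists>p\<in>C. x \<in> fst p \<and> y \<in> fst p \<and> z \<in> fst p" if xyz: "x \<in> SU" "y \<in> SU" "z \<in> SU" for x y z
    proof -
      obtain p q where "p \<in> C" "q \<in> C" "x \<in> fst p" "y \<in> fst p" "z \<in> fst q"
        using two[OF xyz(1,2)] xyz(3) unfolding SU_def by blast
      then show ?thesis using cmp[of p q] unfolding P_def by blast
    qed
    have FU_eq: "FU x y = snd p x y" if "p \<in> C" "x \<in> fst p" "y \<in> fst p" for p x y
    proof -
      have ex: "\<exists>p\<in>C. x \<in> fst p \<and> y \<in> fst p" using that by blast
      define q where "q = (SOME p. p \<in> C \<and> x \<in> fst p \<and> y \<in> fst p)"
      have q: "q \<in> C" "x \<in> fst q" "y \<in> fst q" using someI_ex[of "\<lambda>p. p \<in> C \<and> x \<in> fst p \<and> y \<in> fst p"] ex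
        unfolding q_def by blast+
      have "FU x y = snd q x y" unfolding FU_def q_def using ex by simp
      also have "\<dots> = snd p x y" using cmp[OF that(1) q(1)] that q unfolding P_def by auto
      finally show ?thesis .
    qed
    have goodC: "good p" if "p \<in> C" for p using CA that unfolding A_def by blast
    have sgp: "subgrp (fst p)" if "p \<in> C" for p
      using goodC[OF that] unfolding good_def cocy_def by blast
    have sgU: "subgrp SU" unfolding subgrp_def
    proof (intro conjI ballI)
      obtain p where p: "p \<in> C" using False by blast
      have "0 \<in> fst p" using sgp[OF p] unfolding subgrp_def by blast
      then show "0 \<in> SU" using p unfolding SU_def by blast
    next
      fix x y assume "x \<in> SU" "y \<in> SU"
      then obtain p where p: "p \<in> C" "x \<in> fst p" "y \<in> fst p" using two by blast
      then have "x + y \<in> fst p" using sgp[OF p(1)] unfolding subgrp_def by blast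
      then show "x + y \<in> SU" using p unfolding SU_def by blast
    next
      fix x assume "x \<in> SU"
      then obtain p where p: "p \<in> C" "x \<in> fst p" unfolding SU_def by blast
      then have "- x \<in> fst p" using sgp[OF p(1)] unfolding subgrp_def by blast
      then show "- x \<in> SU" using p unfolding SU_def by blast
    qed
    have cU: "cocy SU FU" unfolding cocy_def
    proof (intro conjI allI impI)
      show "subgrp SU" by (rule sgU)
    next
      fix u v assume "u \<in> SU" "v \<in> SU"
      then obtain p where p: "p \<in> C" "u \<in> fst p" "v \<in> fst p" using two by blast
      then show "FU u v = FU v u" using FU_eq goodC[OF p(1)] unfolding good_def cocy_def by metis
    next
      fix u v w assume "u \<in> SU" "v \<in> SU" "w \<in> SU"
      then obtain p where p: "p \<in> C" "u \<in> fst p" "v \<in> fst p" "w \<in> fst p" using three by blast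
      interpret cp: cocy "fst p" "snd p" using goodC[OF p(1)] unfolding good_def by blast
      show "FU u v + FU (u + v) w = FU u (v + w) + FU v w"
        using FU_eq[OF p(1)] p cp.coc cp.S_add by simp
    qed
    have "good (SU, FU)" unfolding good_def
    proof (intro conjI allI impI ballI)
      show "cocy (fst (SU, FU)) (snd (SU, FU))" using cU by simp
    next
      obtain p where "p \<in> C" using False by blast
      then show "S0 \<subseteq> fst (SU, FU)" using goodC[of p] unfolding good_def SU_def by auto
    next
      fix u v assume "u \<in> fst (SU, FU)" "v \<in> fst (SU, FU)"
      then have "u \<in> SU" "v \<in> SU" by simp_all
      then obtain p where p: "p \<in> C" "u \<in> fst p" "v \<in> fst p" using two by blast
      then show "snd (SU, FU) u v \<in> X" using FU_eq goodC[OF p(1)] unfolding good_def by auto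
    next
      fix u v assume uv: "u \<in> S0" "v \<in> S0"
      obtain p where p: "p \<in> C" using False by blast
      then have "u \<in> fst p" "v \<in> fst p" using goodC[OF p] uv unfolding good_def by auto
      then show "snd (SU, FU) u v = F0 u v" using FU_eq[OF p] goodC[OF p] uv unfolding good_def by auto
    next
      fix u v assume "u \<notin> fst (SU, FU) \<or> v \<notin> fst (SU, FU)"
      then show "snd (SU, FU) u v = 0" unfolding FU_def SU_def by auto
    qed
    moreover have "P a (SU, FU)" if "a \<in> C" for a
      unfolding P_def using that FU_eq unfolding SU_def by auto
    ultimately show ?thesis unfolding A_def by blast
  qed
  obtain m where m: "m \<in> A" and mmax: "\<forall>a\<in>A. P m a \<longrightarrow> a = m"
    using predicate_Zorn[OF po ch] by blast
  have gm: "good m" using m unfolding A_def by blast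
  interpret cm: cocy "fst m" "snd m" using gm unfolding good_def by blast
  have full: "fst m = UNIV"
  proof (rule ccontr)
    assume "fst m \<noteq> UNIV"
    then obtain a where a: "a \<notin> fst m" by blast
    obtain S' F' where S': "subgrp S'" "fst m \<subseteq> S'" "a \<in> S'" "cocy S' F'" "\<forall>u\<in>S'. \<forall>v\<in>S'. F' u v \<in> X"
      "\<forall>u\<in>fst m. \<forall>v\<in>fst m. F' u v = snd m u v"
      using cm.ext_step[OF sX _ a] gm unfolding good_def by blast
    define F'' where "F'' u v = (if u \<in> S' \<and> v \<in> S' then F' u v else 0)" for u v
    have "good (S', F'')" unfolding good_def
      using cocy_cong[OF S'(4), of F''] S' gm unfolding good_def F''_def by (auto simp: subset_iff)
    moreover have "P m (S', F'')" unfolding P_def using S' F''_def by auto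
    ultimately have "(S', F'') = m" using mmax unfolding A_def by blast
    then show False using a S'(3) by auto
  qed
  have "factor_set X (snd m)" unfolding factor_set_def
    using gm cm.sym cm.coc full unfolding good_def by auto
  moreover have "\<forall>u\<in>S0. \<forall>v\<in>S0. snd m u v = F0 u v" using gm unfolding good_def by blast
  ultimately show ?thesis by blast
qed

lemma dsum_subgrp: "subgrp (dsum_omega TYPE('g::ab_group_add))"
  unfolding subgrp_def dsum_omega_def
proof (intro conjI ballI)
  show "0 \<in> {f :: nat \<Rightarrow> 'g. finite {n. f n \<noteq> 0}}" by simp
next
  fix x y :: "nat \<Rightarrow> 'g" assume "x \<in> {f. finite {n. f n \<noteq> 0}}" "y \<in> {f. finite {n. f n \<noteq> 0}}"
  then have "finite ({n. x n \<noteq> 0} \<union> {n. y n \<noteq> 0})" by simp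
  moreover have "{n. (x + y) n \<noteq> 0} \<subseteq> {n. x n \<noteq> 0} \<union> {n. y n \<noteq> 0}" by auto
  ultimately show "x + y \<in> {f. finite {n. f n \<noteq> 0}}" using finite_subset by blast
next
  fix x :: "nat \<Rightarrow> 'g" assume "x \<in> {f. finite {n. f n \<noteq> 0}}"
  then show "- x \<in> {f. finite {n. f n \<noteq> 0}}" by simp
qed

lemma nobad:
  fixes R :: "rat set" and smul :: "rat \<Rightarrow> 'a::ab_group_add \<Rightarrow> 'a" and Bs :: "'a set"
    and z :: "nat \<Rightarrow> 'a" and m :: "nat \<Rightarrow> int"
  assumes tfA: "torsion_free TYPE('a)" and tfG: "torsion_free TYPE('g::ab_group_add)"
    and nucG: "is_nucleus R TYPE('g)" and ext: "ext_zero TYPE('a) (dsum_omega TYPE('g))"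
    and sub: "rat_subring R" and rm: "rmodule R smul" and fin: "finite Bs"
    and m0: "\<forall>i. m i \<noteq> 0" and mR: "\<forall>i. 1 / of_int (m i) \<notin> R"
    and zr: "\<forall>i. z i - zmul (m i) (z (Suc i)) \<in> rspan R smul Bs"
    and zind: "\<forall>k. zmul k (z 0) \<in> rspan R smul Bs \<longrightarrow> k = 0"
  shows False
proof -
  define N where "N = rspan R smul Bs"
  have sgN: "subgrp N" unfolding N_def by (rule rspan_subgrp[OF sub rm])
  have N0: "0 \<in> N" and Nadd: "\<And>x y. x \<in> N \<Longrightarrow> y \<in> N \<Longrightarrow> x + y \<in> N"
    and Nneg: "\<And>x. x \<in> N \<Longrightarrow> -x \<in> N" using sgN unfolding subgrp_def by auto
  have Ndiff: "\<And>x y. x \<in> N \<Longrightarrow> y \<in> N \<Longrightarrow> x - y \<in> N" using subgrp_diff[OF sgN] by blast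
  have Nz: "\<And>x k. x \<in> N \<Longrightarrow> zmul k x \<in> N" using subgrp_zmul[OF sgN] by blast
  define Mp where "Mp i = (\<Prod>l<i. m l)" for i
  have Mp0: "Mp 0 = 1" unfolding Mp_def by simp
  have MpS: "Mp (Suc i) = Mp i * m i" for i unfolding Mp_def by simp
  have Mpnz: "Mp i \<noteq> 0" for i unfolding Mp_def using m0 by simp
  have tele: "\<exists>c. Mp j = Mp i * c \<and> z i - zmul c (z j) \<in> N" if "i \<le> j" for i j
    using that
  proof (induction j)
    case 0 then show ?case using N0 by (intro exI[of _ 1]) simp
  next
    case (Suc j)
    show ?case
    proof (cases "i = Suc j")
      case True then show ?thesis using N0 by (intro exI[of _ 1]) simp
    next
      case False
      then obtain c where c: "Mp j = Mp i * c" "z i - zmul c (z j) \<in> N" using Suc by (metis le_SucE)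
      have "z i - zmul (c * m j) (z (Suc j)) = (z i - zmul c (z j)) + zmul c (z j - zmul (m j) (z (Suc j)))"
        by (simp add: zmul_diff_right zmul_mult)
      then have "z i - zmul (c * m j) (z (Suc j)) \<in> N" using c(2) Nadd Nz zr unfolding N_def by metis
      then show ?thesis using c(1) MpS by (intro exI[of _ "c * m j"]) (simp add: mult.assoc)
    qed
  qed
  have T1: "z 0 - zmul (Mp i) (z i) \<in> N" for i
  proof -
    obtain c where c: "Mp i = Mp 0 * c" "z 0 - zmul c (z i) \<in> N" using tele[of 0 i] by blast
    then show ?thesis using Mp0 by simp
  qed
  have key1: "zmul (Mp i * L) (n + zmul k (z i)) - zmul (k * L) (z 0) \<in> N" if "n \<in> N" for n k i L
  proof -
    define e where "e = z 0 - zmul (Mp i) (z i)"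
    have e: "e \<in> N" "zmul (Mp i) (z i) = z 0 - e" using T1[of i] unfolding e_def by simp_all
    have "zmul (Mp i * L) (n + zmul k (z i)) = zmul (Mp i * L) n + zmul (k * L) (zmul (Mp i) (z i))"
      by (simp add: zmul_add_right zmul_mult[symmetric] algebra_simps)
    also have "\<dots> = zmul (Mp i * L) n + zmul (k * L) (z 0) - zmul (k * L) e"
      using e(2) by (simp add: zmul_diff_right)
    finally have "zmul (Mp i * L) (n + zmul k (z i)) - zmul (k * L) (z 0) = zmul (Mp i * L) n - zmul (k * L) e"
      by simp
    then show ?thesis using Ndiff Nz that e(1) by simp
  qed
  have thuniq: "(of_int k / of_int (Mp i) :: rat) = of_int k' / of_int (Mp i')"
    if "n \<in> N" "n' \<in> N" "n + zmul k (z i) = n' + zmul k' (z i')" for n n' k k' i i'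
  proof -
    have a: "zmul (Mp i * Mp i') (n + zmul k (z i)) - zmul (k * Mp i') (z 0) \<in> N" using key1[OF that(1)] .
    have b: "zmul (Mp i' * Mp i) (n' + zmul k' (z i')) - zmul (k' * Mp i) (z 0) \<in> N" using key1[OF that(2)] .
    have "zmul (k' * Mp i - k * Mp i') (z 0) =
      (zmul (Mp i * Mp i') (n + zmul k (z i)) - zmul (k * Mp i') (z 0)) -
      (zmul (Mp i' * Mp i) (n' + zmul k' (z i')) - zmul (k' * Mp i) (z 0))"
      using that(3) by (simp add: zmul_diff_left mult.commute)
    then have "zmul (k' * Mp i - k * Mp i') (z 0) \<in> N" using a b Ndiff by simp
    then have "k' * Mp i = k * Mp i'" using zind unfolding N_def by fastforce
    then show ?thesis using Mpnz by (simp add: field_simps) (metis of_int_mult mult.commute)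
  qed
  define S where "S = {x. \<exists>n\<in>N. \<exists>k i. x = n + zmul k (z i)}"
  define th where "th x = (THE q. \<exists>n\<in>N. \<exists>k i. x = n + zmul k (z i) \<and> q = (of_int k / of_int (Mp i) :: rat))" for x
  have th_eq: "th (n + zmul k (z i)) = of_int k / of_int (Mp i)" if "n \<in> N" for n k i
    unfolding th_def
  proof (rule the_equality)
    show "\<exists>n'\<in>N. \<exists>k' i'. n + zmul k (z i) = n' + zmul k' (z i') \<and> of_int k / of_int (Mp i) = of_int k' / (of_int (Mp i') :: rat)"
      using that by blast
  next
    fix q assume "\<exists>n'\<in>N. \<exists>k' i'. n + zmul k (z i) = n' + zmul k' (z i') \<and> q = of_int k' / (of_int (Mp i') :: rat)"
    then obtain n' k' i' where q: "n' \<in> N" "n + zmul k (z i) = n' + zmul k' (z i')" "q = of_int k' / (of_int (Mp i') :: rat)"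
      by blast
    show "q = of_int k / of_int (Mp i)" using thuniq[OF that q(1,2)] q(3) by simp
  qed
  have lift: "\<exists>n'\<in>N. \<exists>k'. n + zmul k (z i) = n' + zmul k' (z I) \<and> of_int k' = of_int k * of_int (Mp I) / (of_int (Mp i) :: rat)"
    if nI: "n \<in> N" "i \<le> I" for n k i I
  proof -
    obtain c where c: "Mp I = Mp i * c" "z i - zmul c (z I) \<in> N" using tele[OF nI(2)] by blast
    have "n + zmul k (z i) = (n + zmul k (z i - zmul c (z I))) + zmul (k * c) (z I)"
      by (simp add: zmul_diff_right zmul_mult)
    moreover have "n + zmul k (z i - zmul c (z I)) \<in> N" using nI(1) c(2) Nadd Nz by blast
    moreover have "(of_int (k * c) :: rat) = of_int k * of_int (Mp I) / of_int (Mp i)"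
      using c(1) Mpnz[of i] by simp
    ultimately show ?thesis by blast
  qed
  have S_add: "x + y \<in> S \<and> th (x + y) = th x + th y" if xy: "x \<in> S" "y \<in> S" for x y
  proof -
    obtain n k i where x: "n \<in> N" "x = n + zmul k (z i)" using xy(1) unfolding S_def by blast
    obtain n' k' i' where y: "n' \<in> N" "y = n' + zmul k' (z i')" using xy(2) unfolding S_def by blast
    define I where "I = max i i'"
    obtain n1 k1 where 1: "n1 \<in> N" "x = n1 + zmul k1 (z I)" "(of_int k1 :: rat) = of_int k * of_int (Mp I) / of_int (Mp i)"
      using lift[OF x(1), of i I k] x(2) unfolding I_def by auto
    obtain n2 k2 where 2: "n2 \<in> N" "y = n2 + zmul k2 (z I)" "(of_int k2 :: rat) = of_int k' * of_int (Mp I) / of_int (Mp i')"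
      using lift[OF y(1), of i' I k'] y(2) unfolding I_def by auto
    have xy: "x + y = (n1 + n2) + zmul (k1 + k2) (z I)" using 1(2) 2(2) by (simp add: zmul_add_left algebra_simps)
    have "x + y \<in> S" unfolding S_def using xy Nadd[OF 1(1) 2(1)] by blast
    moreover have "th (x + y) = of_int (k1 + k2) / of_int (Mp I)" using xy th_eq Nadd[OF 1(1) 2(1)] by simp
    moreover have "th x = of_int k / of_int (Mp i)" "th y = of_int k' / of_int (Mp i')" using th_eq x y by auto
    moreover have "(of_int k1 :: rat) / of_int (Mp I) = of_int k / of_int (Mp i)"
      unfolding 1(3) using Mpnz[of I] by simp
    moreover have "(of_int k2 :: rat) / of_int (Mp I) = of_int k' / of_int (Mp i')"
      unfolding 2(3) using Mpnz[of I] by simp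
    ultimately show ?thesis by (simp add: add_divide_distrib)
  qed
  have sgS: "subgrp S" unfolding subgrp_def
  proof (intro conjI ballI)
    show "0 \<in> S" unfolding S_def using N0 by (intro CollectI bexI[of _ 0] exI[of _ 0]) auto
  next
    fix x y assume "x \<in> S" "y \<in> S" then show "x + y \<in> S" using S_add by blast
  next
    fix x assume "x \<in> S"
    then obtain n k i where x: "n \<in> N" "x = n + zmul k (z i)" unfolding S_def by blast
    then have "- x = (-n) + zmul (-k) (z i)" by (simp add: zmul_minus_left)
    then show "- x \<in> S" unfolding S_def using Nneg[OF x(1)] by blast
  qed
  have NS: "N \<subseteq> S" unfolding S_def by (force intro: exI[of _ 0])
  have zS: "z i \<in> S" for i unfolding S_def using N0 by (force intro: exI[of _ 1])
  have large: "\<exists>i. \<forall>j\<ge>i. \<exists>K. (of_int (Mp j) :: rat) * th x = of_int K" if xS: "x \<in> S" for x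
  proof -
    obtain n k i where x: "n \<in> N" "x = n + zmul k (z i)" using xS unfolding S_def by blast
    have "\<exists>K. (of_int (Mp j) :: rat) * th x = of_int K" if ij: "i \<le> j" for j
    proof -
      obtain c where c: "Mp j = Mp i * c" using tele[OF ij] by blast
      have "(of_int (Mp j) :: rat) * th x = of_int (k * c)" using th_eq[OF x(1)] x(2) c Mpnz[of i] by simp
      then show ?thesis by blast
    qed
    then show ?thesis by blast
  qed
  have gex: "\<exists>g::'g. \<forall>y. zmul (m j) y \<noteq> g" for j using nondiv[OF tfG nucG m0[rule_format] mR[rule_format]] .
  define g where "g j = (SOME g::'g. \<forall>y. zmul (m j) y \<noteq> g)" for j
  have gj: "zmul (m j) y \<noteq> g j" for j y using someI_ex[OF gex[of j]] unfolding g_def by blast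
  define psi :: "'a \<Rightarrow> nat \<Rightarrow> 'g" where "psi x = (\<lambda>j. if (of_int (Mp j) :: rat) * th x \<in> \<int>
      then zmul \<lfloor>(of_int (Mp j) :: rat) * th x\<rfloor> (g j) else 0)" for x
  have psiK: "psi x j = zmul K (g j)" if "(of_int (Mp j) :: rat) * th x = of_int K" for x j K
    unfolding psi_def using that by simp
  define F0 where "F0 x y = psi x + psi y - psi (x + y)" for x y
  have cS: "cocy S F0" unfolding cocy_def F0_def using sgS by (simp add: algebra_simps)
  have vS: "\<forall>u\<in>S. \<forall>v\<in>S. F0 u v \<in> dsum_omega TYPE('g)"
  proof (intro ballI)
    fix u v assume uv: "u \<in> S" "v \<in> S"
    obtain i1 where i1: "\<forall>j\<ge>i1. \<exists>K. (of_int (Mp j) :: rat) * th u = of_int K" using large[OF uv(1)] by blast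
    obtain i2 where i2: "\<forall>j\<ge>i2. \<exists>K. (of_int (Mp j) :: rat) * th v = of_int K" using large[OF uv(2)] by blast
    have "F0 u v j = 0" if "j \<ge> max i1 i2" for j
    proof -
      have "j \<ge> i1" "j \<ge> i2" using that by auto
      then obtain K1 K2 where K: "(of_int (Mp j) :: rat) * th u = of_int K1" "(of_int (Mp j) :: rat) * th v = of_int K2"
        using i1 i2 by blast
      have "(of_int (Mp j) :: rat) * th (u + v) = of_int (K1 + K2)"
        using S_add[OF uv] K by (simp add: distrib_left)
      then have "psi (u + v) j = zmul (K1 + K2) (g j)" by (rule psiK)
      then show ?thesis unfolding F0_def using psiK[OF K(1)] psiK[OF K(2)] by (simp add: zmul_add_left)
    qed
    then have "{j. F0 u v j \<noteq> 0} \<subseteq> {..<max i1 i2}" by (auto simp: not_less[symmetric])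
    then show "F0 u v \<in> dsum_omega TYPE('g)" unfolding dsum_omega_def using finite_subset by blast
  qed
  obtain FF where FF: "factor_set (dsum_omega TYPE('g)) FF" "\<forall>u\<in>S. \<forall>v\<in>S. FF u v = F0 u v"
    using ext_factor[OF dsum_subgrp cS vS] by blast
  obtain gg where gg: "\<forall>x. gg x \<in> dsum_omega TYPE('g)" "\<forall>x y. FF x y = gg x + gg y - gg (x + y)"
    using ext FF(1) unfolding ext_zero_def by blast
  define h where "h x = psi x - gg x" for x
  have hadd: "\<forall>x\<in>S. \<forall>y\<in>S. h (x + y) = h x + h y"
  proof (intro ballI)
    fix x y assume "x \<in> S" "y \<in> S"
    then have "psi x + psi y - psi (x + y) = gg x + gg y - gg (x + y)" using FF(2) gg(2) unfolding F0_def by metis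
    then show "h (x + y) = h x + h y" unfolding h_def by (simp add: algebra_simps)
  qed
  have h0: "h 0 = 0" using hadd sgS unfolding subgrp_def by (metis add.right_neutral add_left_cancel)
  have ggfin: "finite {j. gg x j \<noteq> 0}" for x using gg(1) unfolding dsum_omega_def by blast
  have "finite (\<Union>t\<in>Bs. {j. gg t j \<noteq> 0})" using fin ggfin by blast
  then obtain J where J: "(\<Union>t\<in>Bs. {j. gg t j \<noteq> 0}) \<subseteq> {..<J}"
    unfolding finite_nat_iff_bounded by blast
  have th0: "th t = 0" if "t \<in> N" for t using th_eq[OF that, of 0 0] by simp
  have psi0: "psi t = 0" if "t \<in> N" for t unfolding psi_def using th0[OF that] by (simp add: fun_eq_iff)
  have hB: "h t j = 0" if "t \<in> Bs" "j \<ge> J" for t j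
  proof -
    have "t \<in> N" unfolding N_def using rspan_base[OF sub rm that(1)] .
    then have "h t j = - gg t j" unfolding h_def using psi0 by simp
    moreover have "gg t j = 0" using J that by force
    ultimately show ?thesis by simp
  qed
  have hsm: "h (smul r t) j = 0" if "t \<in> Bs" "r \<in> R" "j \<ge> J" for t r j
  proof -
    have "\<exists>a b. b > 0 \<and> r = of_int a / of_int b" using rat_frac[OF sub rm] by blast
    then obtain a b where ab: "b > 0" "r = of_int a / of_int b" by blast
    have tN: "t \<in> N" unfolding N_def using rspan_base[OF sub rm that(1)] .
    then have vN: "smul r t \<in> N" unfolding N_def using rspan_smul[OF sub rm that(2)] by blast
    have "zmul b (smul r t) = zmul a t" using smul_frac[OF sub rm that(2) ab(2)] ab(1) by simp
    then have "zmul b (h (smul r t)) = zmul a (h t)"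
      using additive_zmul[OF sgS hadd] NS vN tN by (metis subsetD)
    then have "zmul b (h (smul r t) j) = zmul a (h t j)" by (metis zmul_fun)
    then have "zmul b (h (smul r t) j) = 0" using hB[OF that(1,3)] by simp
    then show ?thesis using torsion_free_zmul[OF tfG] ab(1) by (metis less_irrefl)
  qed
  have hN: "h x j = 0" if xj: "x \<in> N" "j \<ge> J" for x j
  proof -
    obtain T c where T: "finite T" "T \<subseteq> Bs" "\<forall>t\<in>T. c t \<in> R" "x = (\<Sum>t\<in>T. smul (c t) t)"
      using xj(1) unfolding N_def rspan_def by blast
    have "T' \<subseteq> T \<longrightarrow> h (\<Sum>t\<in>T'. smul (c t) t) j = 0 \<and> (\<Sum>t\<in>T'. smul (c t) t) \<in> N" for T'
    proof (cases "finite T'")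
      case False then show ?thesis using T(1) finite_subset by blast
    next
      case True then show ?thesis
      proof (induction T' rule: finite_induct)
        case empty then show ?case using h0 N0 by simp
      next
        case (insert t T')
        show ?case
        proof
          assume sub': "insert t T' \<subseteq> T"
          then have tB: "t \<in> Bs" and ctR: "c t \<in> R" using T(2,3) by auto
          have vN: "smul (c t) t \<in> N" unfolding N_def using rspan_smul[OF sub rm ctR rspan_base[OF sub rm tB]] .
          have rest: "h (\<Sum>t\<in>T'. smul (c t) t) j = 0" "(\<Sum>t\<in>T'. smul (c t) t) \<in> N"
            using insert.IH sub' by auto
          have eq: "(\<Sum>t\<in>insert t T'. smul (c t) t) = smul (c t) t + (\<Sum>t\<in>T'. smul (c t) t)"
            using insert.hyps by simp
          have "h (smul (c t) t + (\<Sum>t\<in>T'. smul (c t) t)) = h (smul (c t) t) + h (\<Sum>t\<in>T'. smul (c t) t)"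
            using hadd NS vN rest(2) by blast
          then have "h (\<Sum>t\<in>insert t T'. smul (c t) t) j = 0"
            unfolding eq using rest(1) hsm[OF tB ctR xj(2)] by simp
          moreover have "(\<Sum>t\<in>insert t T'. smul (c t) t) \<in> N" unfolding eq using Nadd vN rest(2) by blast
          ultimately show "h (\<Sum>t\<in>insert t T'. smul (c t) t) j = 0 \<and> (\<Sum>t\<in>insert t T'. smul (c t) t) \<in> N"
            by blast
        qed
      qed
    qed
    from this[of T] show ?thesis using T(4) by simp
  qed
  obtain J1 where J1: "{j. gg (z 0) j \<noteq> 0} \<subseteq> {..<J1}" using ggfin[of "z 0"] unfolding finite_nat_iff_bounded by blast
  define j where "j = max J J1"
  have "gg (z 0) j = 0" using J1 unfolding j_def by force
  moreover have "th (z 0) = 1" using th_eq[OF N0, of 1 0] Mp0 by simp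
  ultimately have hz0: "h (z 0) j = zmul (Mp j) (g j)" unfolding h_def using psiK[of j "z 0" "Mp j"] by simp
  define e where "e = z 0 - zmul (Mp (Suc j)) (z (Suc j))"
  have e: "e \<in> N" "z 0 = e + zmul (Mp (Suc j)) (z (Suc j))"
    using T1[of "Suc j"] unfolding e_def by simp_all
  have "h (z 0) = h e + zmul (Mp (Suc j)) (h (z (Suc j)))"
    using e hadd additive_zmul[OF sgS hadd zS] NS subgrp_zmul[OF sgS zS] by (metis subsetD)
  then have "h (z 0) j = h e j + zmul (Mp (Suc j)) (h (z (Suc j)) j)" by (simp add: zmul_fun)
  then have "h (z 0) j = zmul (Mp j) (zmul (m j) (h (z (Suc j)) j))"
    using hN[OF e(1)] MpS zmul_mult unfolding j_def by simp
  then have "zmul (Mp j) (g j) = zmul (Mp j) (zmul (m j) (h (z (Suc j)) j))" using hz0 by simp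
  then have "g j = zmul (m j) (h (z (Suc j)) j)" using torsion_free_zmul_cancel[OF tfG _ Mpnz] by blast
  then show False using gj by metis
qed

lemma rat_gcd: "\<exists>g a b u v. (q::rat) = of_int a * g \<and> (w::rat) = of_int b * g \<and> g = of_int u * q + of_int v * w"
proof -
  obtain a b where ab: "b > 0" "q = of_int a / of_int b" by (metis prod.exhaust quotient_of_denom_pos quotient_of_div)
  obtain c d where cd: "d > 0" "w = of_int c / of_int d" by (metis prod.exhaust quotient_of_denom_pos quotient_of_div)
  define A where "A = a * d"
  define C where "C = c * b"
  define D where "D = b * d"
  have D0: "D > 0" using ab cd by (simp add: D_def)
  have qA: "q = of_int A / of_int D" using ab cd unfolding A_def D_def by (simp add: field_simps)
  have wC: "w = of_int C / of_int D" using ab cd unfolding C_def D_def by (simp add: field_simps)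
  define e where "e = gcd A C"
  obtain u v where uv: "u * A + v * C = e" using bezout_int[of A C] unfolding e_def by blast
  have Ae: "A = e * (A div e)" unfolding e_def by simp
  have Ce: "C = e * (C div e)" unfolding e_def by simp
  define g where "g = (of_int e / of_int D :: rat)"
  have "q = of_int (A div e) * g" unfolding qA g_def by (subst Ae) (simp add: field_simps)
  moreover have "w = of_int (C div e) * g" unfolding wC g_def by (subst Ce) (simp add: field_simps)
  moreover have "g = of_int u * q + of_int v * w" unfolding g_def qA wC uv[symmetric] using D0
    by (simp add: field_simps)
  ultimately show ?thesis by blast
qed

lemma finite_range_bound: "finite T \<Longrightarrow> T \<subseteq> range (x :: nat \<Rightarrow> _) \<Longrightarrow> \<exists>N. T \<subseteq> x ` {..<N}"
proof (induction T rule: finite_induct)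
  case empty then show ?case by simp
next
  case (insert t T)
  then obtain N where N: "T \<subseteq> x ` {..<N}" by blast
  obtain i where i: "t = x i" using insert.prems by blast
  have "insert t T \<subseteq> x ` {..<max N (Suc i)}" using N i by force
  then show ?case by blast
qed

lemma finite_chain_bound:
  assumes "finite T" "T \<subseteq> (\<Union>n::nat. B n)" "\<And>n. B n \<subseteq> B (Suc n)"
  shows "\<exists>N. T \<subseteq> B N"
  using assms(1,2)
proof (induction T rule: finite_induct)
  case empty then show ?case by simp
next
  case (insert t T)
  then obtain N where N: "T \<subseteq> B N" by blast
  obtain i where i: "t \<in> B i" using insert.prems by blast
  have mono: "B a \<subseteq> B b" if "a \<le> b" for a b using lift_Suc_mono_le[of B, OF assms(3) that] .
  have "insert t T \<subseteq> B (max N i)" using N i mono[of N "max N i"] mono[of i "max N i"] by auto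
  then show ?case by blast
qed

lemma smul_diff_left:
  assumes sub: "rat_subring R" and rm: "rmodule R smul" and "r \<in> R" "s \<in> R"
  shows "smul (r - s) x = smul r x - smul s x"
  using smul_add_left[OF sub rm R_diff[OF sub assms(3,4)] assms(4), of x] by (simp add: algebra_simps)

lemma smul_int_mult:
  assumes sub: "rat_subring R" and rm: "rmodule R smul" and "r \<in> R"
  shows "smul (of_int k * r) x = zmul k (smul r x)"
  using smul_mult[OF sub rm R_int[OF sub] assms(3)] smul_int[OF sub rm] by simp

locale pont =
  fixes R :: "rat set" and smul :: "rat \<Rightarrow> 'a::ab_group_add \<Rightarrow> 'a" and M :: "'a set" and x :: "nat \<Rightarrow> 'a"
  assumes tfA: "torsion_free TYPE('a)" and sub: "rat_subring R" and rm: "rmodule R smul"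
    and Msub: "rsubmodule R smul M" and xM: "\<And>i. x i \<in> M" and Mspan: "rspan R smul (range x) = M"
    and nb: "\<And>Bs z m. finite Bs \<Longrightarrow> \<forall>i. m i \<noteq> 0 \<Longrightarrow> \<forall>i. 1 / of_int (m i) \<notin> R \<Longrightarrow>
        \<forall>i. z i - zmul (m i) (z (Suc i)) \<in> rspan R smul Bs \<Longrightarrow>
        \<forall>k. zmul k (z 0) \<in> rspan R smul Bs \<longrightarrow> k = 0 \<Longrightarrow> False"
begin

definition L where "L n = rspan R smul (x ` {..<n})"
definition P where "P n = {y \<in> M. \<exists>k. k \<noteq> 0 \<and> zmul k y \<in> L n}"

lemma L_M: "L n \<subseteq> M" unfolding L_def using rspan_sub[OF sub rm Msub] xM by blast

lemma L_mono: "n \<le> n' \<Longrightarrow> L n \<subseteq> L n'" unfolding L_def by (rule rspan_mono[OF sub rm]) auto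

lemma L_Suc: "L (Suc n) = rspan R smul (insert (x n) (x ` {..<n}))" unfolding L_def
  by (simp add: lessThan_Suc)

lemma L_add: "a \<in> L n \<Longrightarrow> b \<in> L n \<Longrightarrow> a + b \<in> L n" unfolding L_def using rspan_add[OF sub rm] by blast
lemma L_diff: "a \<in> L n \<Longrightarrow> b \<in> L n \<Longrightarrow> a - b \<in> L n" unfolding L_def using rspan_diff[OF sub rm] by blast
lemma L_zmul: "a \<in> L n \<Longrightarrow> zmul k a \<in> L n" unfolding L_def using rspan_zmul[OF sub rm] by blast
lemma L_smul: "r \<in> R \<Longrightarrow> a \<in> L n \<Longrightarrow> smul r a \<in> L n" unfolding L_def using rspan_smul[OF sub rm] by blast
lemma L_0: "0 \<in> L n" unfolding L_def using rspan_0[OF sub rm] by blast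

lemma P_M: "P n \<subseteq> M" unfolding P_def by blast

lemma L_P: "L n \<subseteq> P n" unfolding P_def using L_M by (force intro: exI[of _ 1])

lemma P_mono: "n \<le> n' \<Longrightarrow> P n \<subseteq> P n'" unfolding P_def using L_mono by blast

lemma P_rsub: "rsubmodule R smul (P n)"
  unfolding rsubmodule_def
proof (intro conjI ballI)
  show "0 \<in> P n" using L_P L_0 by blast
next
  fix a b assume "a \<in> P n" "b \<in> P n"
  then obtain k k' where k: "k \<noteq> 0" "zmul k a \<in> L n" "k' \<noteq> 0" "zmul k' b \<in> L n" "a \<in> M" "b \<in> M"
    unfolding P_def by blast
  have "zmul (k' * k) (a + b) = zmul k' (zmul k a) + zmul k (zmul k' b)"
    by (simp add: zmul_add_right zmul_mult[symmetric] mult.commute)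
  then have "zmul (k' * k) (a + b) \<in> L n" using k L_zmul L_add by simp
  moreover have "a + b \<in> M" using Msub k unfolding rsubmodule_def by blast
  moreover have "k' * k \<noteq> 0" using k by simp
  ultimately show "a + b \<in> P n" unfolding P_def by blast
next
  fix r a assume "r \<in> R" "a \<in> P n"
  then obtain k where k: "k \<noteq> 0" "zmul k a \<in> L n" "a \<in> M" unfolding P_def by blast
  have "zmul k (smul r a) = smul r (zmul k a)" using smul_zmul[OF sub rm \<open>r \<in> R\<close>] by simp
  then have "zmul k (smul r a) \<in> L n" using L_smul \<open>r \<in> R\<close> k by simp
  moreover have "smul r a \<in> M" using Msub k \<open>r \<in> R\<close> unfolding rsubmodule_def by blast
  ultimately show "smul r a \<in> P n" unfolding P_def using k(1) by blast
qed

lemma P_0: "P 0 = {0}"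
proof -
  have "L 0 = {0}" unfolding L_def rspan_def by auto
  then have "y = 0" if "y \<in> P 0" for y using that tfA torsion_free_zmul unfolding P_def by blast
  then show ?thesis using P_rsub[of 0] unfolding rsubmodule_def by blast
qed

lemma rspan_empty: "rspan R smul {} = {0}" unfolding rspan_def by auto

lemma step:
  assumes B: "finite B" "rindep R smul B" "rspan R smul B = P n"
  shows "\<exists>B'. B \<subseteq> B' \<and> finite B' \<and> rindep R smul B' \<and> rspan R smul B' = P (Suc n)"
proof (cases "\<exists>k. k \<noteq> 0 \<and> zmul k (x n) \<in> L n")
  case True
  then obtain k where k: "k \<noteq> 0" "zmul k (x n) \<in> L n" by blast
  have "P (Suc n) \<subseteq> P n"
  proof
    fix y assume "y \<in> P (Suc n)"
    then obtain k' where y: "y \<in> M" "k' \<noteq> 0" "zmul k' y \<in> L (Suc n)" unfolding P_def by blast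
    have "zmul k' y \<in> rspan R smul (insert (x n) (x ` {..<n}))" using y(3) L_Suc by simp
    then obtain l r where lr: "l \<in> L n" "r \<in> R" "zmul k' y = l + smul r (x n)"
      using rspan_insert[OF sub rm] unfolding L_def by blast
    have "zmul (k * k') y = zmul k l + smul r (zmul k (x n))"
      using lr(3) smul_zmul[OF sub rm lr(2)] by (simp add: zmul_mult zmul_add_right)
    then have "zmul (k * k') y \<in> L n" using L_add L_zmul L_smul lr k by simp
    moreover have "k * k' \<noteq> 0" using y k by simp
    ultimately show "y \<in> P n" unfolding P_def using y(1) by blast
  qed
  then have "P (Suc n) = P n" using P_mono[of n "Suc n"] by auto
  then show ?thesis using B by blast
next
  case False
  define X where "X = x n"
  have XP: "X \<in> P (Suc n)" unfolding P_def X_def L_Suc using xM rspan_base[OF sub rm, of "x n"]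
    by (force intro: exI[of _ 1])
  have rho: "\<rho> = 0" if "\<rho> \<in> R" "smul \<rho> X \<in> L n" for \<rho>
  proof -
    have "\<exists>a b. b > 0 \<and> \<rho> = of_int a / of_int b" using rat_frac[OF sub rm] by blast
    then obtain a b where ab: "b > 0" "\<rho> = of_int a / of_int b" by blast
    have "zmul a X = zmul b (smul \<rho> X)" using smul_frac[OF sub rm that(1) ab(2)] ab(1) by simp
    then have "zmul a X \<in> L n" using L_zmul that(2) by simp
    then have "a = 0" using False unfolding X_def by blast
    then show ?thesis using ab by simp
  qed
  have rep: "\<exists>k l r. k \<noteq> 0 \<and> l \<in> L n \<and> r \<in> R \<and> zmul k y = l + smul r X" if yP: "y \<in> P (Suc n)" for y
  proof -
    obtain k where k: "k \<noteq> 0" "zmul k y \<in> L (Suc n)" using yP unfolding P_def by blast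
    have "zmul k y \<in> rspan R smul (insert (x n) (x ` {..<n}))" using k(2) L_Suc by simp
    then obtain l r where "l \<in> L n" "r \<in> R" "zmul k y = l + smul r X"
      using rspan_insert[OF sub rm] unfolding L_def X_def by blast
    then show ?thesis using k by blast
  qed
  have uniq: "r / of_int k = r' / of_int k'"
    if "k \<noteq> 0" "l \<in> L n" "r \<in> R" "zmul k y = l + smul r X"
       "k' \<noteq> 0" "l' \<in> L n" "r' \<in> R" "zmul k' y = l' + smul r' X" for y k l r k' l' r'
  proof -
    have "zmul k' (zmul k y) = zmul k (zmul k' y)" by (simp add: zmul_mult[symmetric] mult.commute)
    then have "zmul k' l + smul (of_int k' * r) X = zmul k l' + smul (of_int k * r') X"
      using that smul_int_mult[OF sub rm] by (simp add: zmul_add_right)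
    then have "smul (of_int k' * r) X - smul (of_int k * r') X = zmul k l' - zmul k' l"
      by (simp add: algebra_simps)
    moreover have "smul (of_int k' * r - of_int k * r') X = smul (of_int k' * r) X - smul (of_int k * r') X"
      using smul_diff_left[OF sub rm] R_mult[OF sub R_int[OF sub]] that(3,7) by blast
    ultimately have "smul (of_int k' * r - of_int k * r') X \<in> L n" using L_diff L_zmul that(2,6) by simp
    then have "of_int k' * r - of_int k * r' = 0"
      using rho R_diff[OF sub] R_mult[OF sub R_int[OF sub]] that(3,7) by blast
    then show ?thesis using that(1,5) by (simp add: field_simps)
  qed
  define tau where "tau y = (THE q. \<exists>k l r. k \<noteq> 0 \<and> l \<in> L n \<and> r \<in> R \<and> zmul k y = l + smul r X \<and> q = r / of_int k)" for y
  have tau_eq: "tau y = r / of_int k" if "k \<noteq> 0" "l \<in> L n" "r \<in> R" "zmul k y = l + smul r X" for y k l r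
    unfolding tau_def
  proof (rule the_equality)
    show "\<exists>k' l' r'. k' \<noteq> 0 \<and> l' \<in> L n \<and> r' \<in> R \<and> zmul k' y = l' + smul r' X \<and> r / of_int k = r' / of_int k'"
      using that by blast
  next
    fix q assume "\<exists>k' l' r'. k' \<noteq> 0 \<and> l' \<in> L n \<and> r' \<in> R \<and> zmul k' y = l' + smul r' X \<and> q = r' / of_int k'"
    then obtain k' l' r' where q: "k' \<noteq> 0" "l' \<in> L n" "r' \<in> R" "zmul k' y = l' + smul r' X" "q = r' / of_int k'"
      by blast
    show "q = r / of_int k" using uniq[OF that q(1-4)] q(5) by simp
  qed
  have PS: "rsubmodule R smul (P (Suc n))" by (rule P_rsub)
  have PSadd: "a + b \<in> P (Suc n)" if "a \<in> P (Suc n)" "b \<in> P (Suc n)" for a b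
    using PS that unfolding rsubmodule_def by blast
  have PSsmul: "smul r a \<in> P (Suc n)" if "r \<in> R" "a \<in> P (Suc n)" for r a
    using PS that unfolding rsubmodule_def by blast
  have tau_add: "tau (a + b) = tau a + tau b" if ab: "a \<in> P (Suc n)" "b \<in> P (Suc n)" for a b
  proof -
    obtain k l r where 1: "k \<noteq> 0" "l \<in> L n" "r \<in> R" "zmul k a = l + smul r X" using rep[OF ab(1)] by blast
    obtain k' l' r' where 2: "k' \<noteq> 0" "l' \<in> L n" "r' \<in> R" "zmul k' b = l' + smul r' X" using rep[OF ab(2)] by blast
    have "zmul (k * k') (a + b) = zmul k' (zmul k a) + zmul k (zmul k' b)"
      by (simp add: zmul_add_right zmul_mult[symmetric] mult.commute)
    also have "\<dots> = (zmul k' l + zmul k l') + (smul (of_int k' * r) X + smul (of_int k * r') X)"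
      using 1 2 smul_int_mult[OF sub rm] by (simp add: zmul_add_right algebra_simps)
    also have "\<dots> = (zmul k' l + zmul k l') + smul (of_int k' * r + of_int k * r') X"
      using smul_add_left[OF sub rm R_mult[OF sub R_int[OF sub] 1(3)] R_mult[OF sub R_int[OF sub] 2(3)]] by simp
    finally have "tau (a + b) = (of_int k' * r + of_int k * r') / of_int (k * k')"
      using tau_eq[of "k * k'" "zmul k' l + zmul k l'"] 1 2 L_add L_zmul
        R_add[OF sub R_mult[OF sub R_int[OF sub] 1(3)] R_mult[OF sub R_int[OF sub] 2(3)]] by simp
    moreover have "tau a = r / of_int k" "tau b = r' / of_int k'" using tau_eq 1 2 by auto
    moreover have "(of_int k' * r + of_int k * r') / of_int (k * k') = r / of_int k + r' / of_int k'"
      using 1(1) 2(1) by (simp add: field_simps)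
    ultimately show ?thesis by simp
  qed
  have tau_smul: "tau (smul \<rho> a) = \<rho> * tau a" if ra: "\<rho> \<in> R" "a \<in> P (Suc n)" for \<rho> a
  proof -
    obtain k l r where 1: "k \<noteq> 0" "l \<in> L n" "r \<in> R" "zmul k a = l + smul r X" using rep[OF ra(2)] by blast
    have "zmul k (smul \<rho> a) = smul \<rho> l + smul (\<rho> * r) X"
      using 1(4) smul_zmul[OF sub rm that(1)] smul_add_right[OF sub rm that(1)] smul_mult[OF sub rm that(1) 1(3)]
      by metis
    then have "tau (smul \<rho> a) = (\<rho> * r) / of_int k"
      using tau_eq 1 L_smul that(1) R_mult[OF sub that(1) 1(3)] by blast
    moreover have "tau a = r / of_int k" using tau_eq 1 by auto
    ultimately show ?thesis by simp
  qed
  have tau_zmul: "tau (zmul k a) = of_int k * tau a" if "a \<in> P (Suc n)" for k a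
    using tau_smul[OF R_int[OF sub] that] smul_int[OF sub rm] by simp
  have tau_zero: "tau a = 0 \<longleftrightarrow> a \<in> P n" if aP: "a \<in> P (Suc n)" for a
  proof -
    obtain k l r where 1: "k \<noteq> 0" "l \<in> L n" "r \<in> R" "zmul k a = l + smul r X" using rep[OF aP] by blast
    have t: "tau a = r / of_int k" using tau_eq 1 by auto
    show ?thesis
    proof
      assume "tau a = 0"
      then have "r = 0" using t 1(1) by simp
      then have "zmul k a \<in> L n" using 1 smul_zero_left[OF sub rm] by simp
      then show "a \<in> P n" unfolding P_def using 1(1) aP P_M by blast
    next
      assume "a \<in> P n"
      then obtain k' where k': "k' \<noteq> 0" "zmul k' a \<in> L n" unfolding P_def by blast
      then have "tau a = 0 / of_int k'" using tau_eq[of k' "zmul k' a" 0 a] R_0[OF sub] smul_zero_left[OF sub rm] by simp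
      then show "tau a = 0" by simp
    qed
  qed
  have tauX: "tau X = 1" using tau_eq[of 1 0 1 X] L_0 R_1[OF sub] smul_one[OF sub rm] by simp
  define I where "I = tau ` P (Suc n)"
  show ?thesis
  proof (cases "\<exists>q\<in>I. \<forall>w\<in>I. \<exists>\<rho>\<in>R. w = \<rho> * q")
    case True
    then obtain q where q: "q \<in> I" "\<forall>w\<in>I. \<exists>\<rho>\<in>R. w = \<rho> * q" by blast
    obtain y where y: "y \<in> P (Suc n)" "tau y = q" using q(1) unfolding I_def by blast
    have q0: "q \<noteq> 0" using q(2) tauX XP unfolding I_def by fastforce
    have BPn: "B \<subseteq> P n" using B(3) rspan_base[OF sub rm, of _ B] by blast
    have yB: "y \<notin> B" using BPn tau_zero[OF y(1)] y(2) q0 by blast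
    define B' where "B' = insert y B"
    have "B' \<subseteq> P (Suc n)" unfolding B'_def using BPn P_mono[of n "Suc n"] y(1) by auto
    then have "rspan R smul B' \<subseteq> P (Suc n)" by (rule rspan_sub[OF sub rm PS])
    moreover have "P (Suc n) \<subseteq> rspan R smul B'"
    proof
      fix w assume w: "w \<in> P (Suc n)"
      then obtain \<rho> where \<rho>: "\<rho> \<in> R" "tau w = \<rho> * q" using q(2) unfolding I_def by blast
      define w' where "w' = w + smul (- \<rho>) y"
      have w'P: "w' \<in> P (Suc n)" unfolding w'_def using PSadd PSsmul w y(1) R_uminus[OF sub \<rho>(1)] by blast
      have "tau w' = 0" unfolding w'_def using tau_add[OF w PSsmul[OF R_uminus[OF sub \<rho>(1)] y(1)]]
        tau_smul[OF R_uminus[OF sub \<rho>(1)] y(1)] \<rho>(2) y(2) by simp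
      then have "w' \<in> rspan R smul B" using tau_zero[OF w'P] B(3) by blast
      moreover have "w = w' + smul \<rho> y"
        unfolding w'_def using smul_add_left[OF sub rm R_uminus[OF sub \<rho>(1)] \<rho>(1), of y] smul_zero_left[OF sub rm]
        by (simp add: algebra_simps)
      ultimately show "w \<in> rspan R smul B'" unfolding B'_def using rspan_insertI[OF sub rm _ \<rho>(1)] by simp
    qed
    moreover have "rindep R smul B'"
      unfolding rindep_def
    proof (intro allI impI ballI)
      fix T c t assume T: "finite T" "T \<subseteq> B'" "\<forall>t\<in>T. c t \<in> R" "(\<Sum>t\<in>T. smul (c t) t) = 0" "t \<in> T"
      show "c t = 0"
      proof (cases "y \<in> T")
        case False
        then have "T \<subseteq> B" using T(2) unfolding B'_def by blast
        then show ?thesis using B(2) T unfolding rindep_def by blast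
      next
        case True
        have sumeq: "(\<Sum>t\<in>T. smul (c t) t) = smul (c y) y + (\<Sum>t\<in>T - {y}. smul (c t) t)"
          using sum.remove[OF T(1) True] by simp
        have TB: "T - {y} \<subseteq> B" using T(2) unfolding B'_def by blast
        have restB: "(\<Sum>t\<in>T - {y}. smul (c t) t) \<in> rspan R smul B"
          unfolding rspan_def using T(1,3) TB by blast
        have "smul (c y) y = - (\<Sum>t\<in>T - {y}. smul (c t) t)" using sumeq T(4) by (simp add: add_eq_0_iff2)
        then have "smul (c y) y \<in> P n" using restB B(3) rspan_uminus[OF sub rm] by metis
        then have "c y * q = 0" using tau_zero[OF PSsmul[OF _ y(1)]] tau_smul[OF _ y(1)] y(2) T(3) True by metis
        then have cy: "c y = 0" using q0 by simp
        then have "(\<Sum>t\<in>T - {y}. smul (c t) t) = 0" using sumeq T(4) smul_zero_left[OF sub rm] by simp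
        then have "\<forall>t\<in>T - {y}. c t = 0" using B(2) T(1,3) TB unfolding rindep_def by blast
        then show ?thesis using cy T(5) by (cases "t = y") auto
      qed
    qed
    ultimately show ?thesis using B(1) unfolding B'_def by blast
  next
    case False
    have Icl: "of_int u * a + of_int v * b \<in> I" if ab: "a \<in> I" "b \<in> I" for u v a b
    proof -
      obtain ya yb where y: "ya \<in> P (Suc n)" "yb \<in> P (Suc n)" "a = tau ya" "b = tau yb"
        using ab unfolding I_def by blast
      have "zmul u ya + zmul v yb \<in> P (Suc n)" using PSadd PSsmul y smul_int[OF sub rm] R_int[OF sub] by metis
      moreover have "tau (zmul u ya + zmul v yb) = of_int u * a + of_int v * b"
        using tau_add tau_zmul y PSsmul smul_int[OF sub rm] R_int[OF sub] by metis
      ultimately show ?thesis unfolding I_def by force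
    qed
    have nxt: "\<exists>mq. snd mq \<in> I \<and> snd mq \<noteq> 0 \<and> fst mq \<noteq> 0 \<and> 1 / of_int (fst mq) \<notin> R \<and> q = of_int (fst mq) * snd mq"
      if qI: "q \<in> I" "q \<noteq> 0" for q
    proof -
      obtain w where w: "w \<in> I" "\<forall>\<rho>\<in>R. w \<noteq> \<rho> * q" using False qI(1) by blast
      obtain g a b u v where g: "q = of_int a * g" "w = of_int b * g" "g = of_int u * q + of_int v * w"
        using rat_gcd[of q w] by blast
      have gI: "g \<in> I" using g(3) Icl qI(1) w(1) by simp
      have a0: "a \<noteq> 0" "g \<noteq> 0" using g(1) qI(2) by auto
      have "1 / of_int a \<notin> R"
      proof
        assume "1 / of_int a \<in> R"
        then have "of_int b * (1 / of_int a) \<in> R" using R_mult[OF sub R_int[OF sub]] by blast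
        moreover have "w = (of_int b * (1 / of_int a)) * q" using g(1,2) a0 by simp
        ultimately show False using w(2) by blast
      qed
      then show ?thesis using gI a0 g(1) by (intro exI[of _ "(a, g)"]) simp
    qed
    define nx where "nx q = (SOME mq. snd mq \<in> I \<and> snd mq \<noteq> 0 \<and> fst mq \<noteq> 0 \<and> 1 / of_int (fst mq) \<notin> R \<and> q = of_int (fst mq) * snd mq)" for q
    define qs where "qs i = rec_nat (1::rat) (\<lambda>_ q. snd (nx q)) i" for i
    have qs0: "qs 0 = 1" unfolding qs_def by simp
    have qsS: "qs (Suc i) = snd (nx (qs i))" for i unfolding qs_def by simp
    have qsI: "qs i \<in> I \<and> qs i \<noteq> 0" for i
    proof (induction i)
      case 0 then show ?case using qs0 tauX XP unfolding I_def by force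
    next
      case (Suc i)
      then show ?case using someI_ex[OF nxt[of "qs i"]] qsS unfolding nx_def by simp
    qed
    define ms where "ms i = fst (nx (qs i))" for i
    have msP: "ms i \<noteq> 0 \<and> 1 / of_int (ms i) \<notin> R \<and> qs i = of_int (ms i) * qs (Suc i)" for i
      using someI_ex[OF nxt[of "qs i"]] qsI[of i] qsS unfolding nx_def ms_def by simp
    define zs where "zs i = (SOME y. y \<in> P (Suc n) \<and> tau y = qs i)" for i
    have zsP: "zs i \<in> P (Suc n) \<and> tau (zs i) = qs i" for i
    proof -
      have "\<exists>y. y \<in> P (Suc n) \<and> tau y = qs i" using qsI[of i] unfolding I_def by (metis imageE)
      then show ?thesis unfolding zs_def by (rule someI_ex)
    qed
    have zdiff: "zs i - zmul (ms i) (zs (Suc i)) \<in> rspan R smul B" for i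
    proof -
      have inP: "zmul (- ms i) (zs (Suc i)) \<in> P (Suc n)" using PSsmul[OF R_int[OF sub] conjunct1[OF zsP]] smul_int[OF sub rm] by metis
      have "tau (zs i + zmul (- ms i) (zs (Suc i))) = 0"
        using tau_add[OF conjunct1[OF zsP] inP] tau_zmul[OF conjunct1[OF zsP]] zsP msP[of i] by simp
      moreover have "zs i + zmul (- ms i) (zs (Suc i)) = zs i - zmul (ms i) (zs (Suc i))"
        by (simp add: zmul_minus_left)
      ultimately show ?thesis using tau_zero PSadd[OF conjunct1[OF zsP] inP] B(3) by metis
    qed
    have zind: "\<forall>k. zmul k (zs 0) \<in> rspan R smul B \<longrightarrow> k = 0"
    proof (intro allI impI)
      fix k assume "zmul k (zs 0) \<in> rspan R smul B"
      then have "tau (zmul k (zs 0)) = 0" using tau_zero PSsmul[OF R_int[OF sub] conjunct1[OF zsP]] smul_int[OF sub rm] B(3)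
        by metis
      then show "k = 0" using tau_zmul[OF conjunct1[OF zsP]] zsP qs0 by simp
    qed
    show ?thesis using nb[OF B(1), of ms zs] msP zdiff zind by blast
  qed
qed

lemma free: "rfree R smul M"
proof -
  define Bseq where "Bseq n = rec_nat {} (\<lambda>n B. SOME B'. B \<subseteq> B' \<and> finite B' \<and> rindep R smul B' \<and> rspan R smul B' = P (Suc n)) n" for n
  have B0: "Bseq 0 = {}" unfolding Bseq_def by simp
  have BS: "Bseq (Suc n) = (SOME B'. Bseq n \<subseteq> B' \<and> finite B' \<and> rindep R smul B' \<and> rspan R smul B' = P (Suc n))" for n
    unfolding Bseq_def by simp
  have inv: "finite (Bseq n) \<and> rindep R smul (Bseq n) \<and> rspan R smul (Bseq n) = P n" for n
  proof (induction n)
    case 0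
    have "rindep R smul {}" unfolding rindep_def by blast
    then show ?case using B0 P_0 rspan_empty by simp
  next
    case (Suc n)
    then have "\<exists>B'. Bseq n \<subseteq> B' \<and> finite B' \<and> rindep R smul B' \<and> rspan R smul B' = P (Suc n)"
      using step by blast
    from someI_ex[OF this] show ?case using BS by simp
  qed
  have mono: "Bseq n \<subseteq> Bseq (Suc n)" for n
  proof -
    have "\<exists>B'. Bseq n \<subseteq> B' \<and> finite B' \<and> rindep R smul B' \<and> rspan R smul B' = P (Suc n)"
      using step inv by blast
    from someI_ex[OF this] show ?thesis using BS by simp
  qed
  define Bu where "Bu = (\<Union>n. Bseq n)"
  have BnM: "Bseq n \<subseteq> M" for n using inv[of n] rspan_base[OF sub rm, of _ "Bseq n"] P_M by blast
  have BuM: "Bu \<subseteq> M" unfolding Bu_def using BnM by blast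
  have "rindep R smul Bu" unfolding rindep_def
  proof (intro allI impI)
    fix T c assume T: "finite T" "T \<subseteq> Bu" "\<forall>t\<in>T. c t \<in> R" "(\<Sum>t\<in>T. smul (c t) t) = 0"
    have "T \<subseteq> (\<Union>n. Bseq n)" using T(2) unfolding Bu_def .
    then obtain N where "T \<subseteq> Bseq N" using finite_chain_bound[of T Bseq] T(1) mono by blast
    then show "\<forall>t\<in>T. c t = 0" using inv[of N] T unfolding rindep_def by blast
  qed
  moreover have "rspan R smul Bu = M"
  proof
    show "rspan R smul Bu \<subseteq> M" using rspan_sub[OF sub rm Msub BuM] .
  next
    show "M \<subseteq> rspan R smul Bu"
    proof
      fix y assume "y \<in> M"
      then have "y \<in> rspan R smul (range x)" using Mspan by simp
      then obtain T c where T: "finite T" "T \<subseteq> range x" "\<forall>t\<in>T. c t \<in> R" "y = (\<Sum>t\<in>T. smul (c t) t)"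
        unfolding rspan_def by blast
      obtain N where N: "T \<subseteq> x ` {..<N}" using finite_range_bound[OF T(1,2)] by blast
      have "y \<in> L N" unfolding L_def rspan_def using T(1,3,4) N by blast
      then have "y \<in> rspan R smul (Bseq N)" using L_P inv[of N] by blast
      then show "y \<in> rspan R smul Bu" using rspan_mono[OF sub rm, of "Bseq N" Bu] unfolding Bu_def by blast
    qed
  qed
  ultimately show ?thesis unfolding rfree_def using BuM by blast
qed

end

theorem proposition7p2:
  fixes R :: "rat set"
  assumes "torsion_free TYPE('a::ab_group_add)" and "nonzero_group TYPE('a)"
    and "torsion_free TYPE('g::ab_group_add)" and "nonzero_group TYPE('g)"
    and "is_nucleus R TYPE('a)" and "is_nucleus R TYPE('g)"
    and "ext_zero TYPE('a) (dsum_omega TYPE('g))"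
  shows "\<forall>smul :: rat \<Rightarrow> 'a \<Rightarrow> 'a. rmodule R smul \<longrightarrow> aleph1_free R smul"
proof (intro allI impI)
  fix smul :: "rat \<Rightarrow> 'a \<Rightarrow> 'a"
  assume rm: "rmodule R smul"
  have sub: "rat_subring R" using assms(5) unfolding is_nucleus_def by blast
  show "aleph1_free R smul" unfolding aleph1_free_def
  proof (intro allI impI)
    fix M assume Msub: "rsubmodule R smul M" and "\<exists>S. countable S \<and> S \<subseteq> M \<and> rspan R smul S = M"
    then obtain S where S: "countable S" "S \<subseteq> M" "rspan R smul S = M" by blast
    show "rfree R smul M"
    proof (cases "S = {}")
      case True
      have "rindep R smul {}" unfolding rindep_def by blast
      moreover have "rspan R smul {} = M" using S(3) True by simp
      ultimately show ?thesis unfolding rfree_def by blast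
    next
      case False
      define x where "x = from_nat_into S"
      have rx: "range x = S" unfolding x_def using range_from_nat_into[OF False S(1)] .
      interpret pont R smul M x
      proof
        show "torsion_free TYPE('a)" by (rule assms(1))
        show "rat_subring R" by (rule sub)
        show "rmodule R smul" by (rule rm)
        show "rsubmodule R smul M" by (rule Msub)
        show "x i \<in> M" for i using rx S(2) by blast
        show "rspan R smul (range x) = M" using rx S(3) by simp
      next
        fix Bs :: "'a set" and z :: "nat \<Rightarrow> 'a" and m :: "nat \<Rightarrow> int"
        assume "finite Bs" "\<forall>i. m i \<noteq> 0" "\<forall>i. 1 / of_int (m i) \<notin> R"
          "\<forall>i. z i - zmul (m i) (z (Suc i)) \<in> rspan R smul Bs"
          "\<forall>k. zmul k (z 0) \<in> rspan R smul Bs \<longrightarrow> k = 0"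
        then show False using nobad[OF assms(1) assms(3) assms(6) assms(7) sub rm] by blast
      qed
      show ?thesis by (rule free)
    qed
  qed
qed

end
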